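(* Let $f,g:\mathbb R^n\to\mathbb R$ be two integrable log-concave functions with full-dimensional support. Then for any $t_1,t_2\in(0,1]$ and any $\lambda\in[0,1]$, $$M_{t_1^\lambda t_2^{1-\lambda}}^{1/n}\geq\lambda M_{t_1}^{1/n}+(1-\lambda)M_{t_2}^{1/n}.$$ Consequently, $t\mapsto M_t$ is continuous on $(0,1)$.
   Context: For integrable log-concave $f,g$ on $\mathbb R^n$ with full-dimensional support, $t\in(0,1]$ and $x\in\mathrm{supp}\,f+\mathrm{supp}\,g$, let $\mathcal A_t(x)=\{z\in\mathrm{supp}\,f\cap(x-\mathrm{supp}\,g): f(z)g(x-z)\geq t\Vert f\Vert_\infty\Vert g\Vert_\infty\}$ and $M_t=\max_{x_0\in\mathrm{supp}\,f+\mathrm{supp}\,g}|\mathcal A_t(x_0)|$, where $|\cdot|$ is Lebesgue volume. *)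

theory Defs
  imports "HOL-Analysis.Analysis"
begin

definition log_concave :: "('a::real_vector \<Rightarrow> real) \<Rightarrow> bool" where
  "log_concave f \<longleftrightarrow> (\<forall>x. 0 \<le> f x) \<and>
     (\<forall>x y. \<forall>l\<in>{0..1::real}.
        f x powr (1 - l) * f y powr l \<le> f ((1 - l) *\<^sub>R x + l *\<^sub>R y))"

definition supp :: "('a \<Rightarrow> real) \<Rightarrow> 'a set" where
  "supp f = {x. 0 < f x}"

definition sup_norm :: "('a \<Rightarrow> real) \<Rightarrow> real" where
  "sup_norm f = Sup (range f)"

definition minkowski_sum :: "'a::ab_group_add set \<Rightarrow> 'a set \<Rightarrow> 'a set" where
  "minkowski_sum A B = {a + b | a b. a \<in> A \<and> b \<in> B}"

definition At_set :: "('a::ab_group_add \<Rightarrow> real) \<Rightarrow> ('a \<Rightarrow> real) \<Rightarrow> real \<Rightarrow> 'a \<Rightarrow> 'a set" where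
  "At_set f g t x = {z \<in> supp f \<inter> {x - w | w. w \<in> supp g}.
                      t * sup_norm f * sup_norm g \<le> f z * g (x - z)}"

text \<open>M_t = max over x0 in supp f + supp g of the volume of A_t(x0) (written as a supremum).\<close>
definition M_t :: "('a::euclidean_space \<Rightarrow> real) \<Rightarrow> ('a \<Rightarrow> real) \<Rightarrow> real \<Rightarrow> real" where
  "M_t f g t = (SUP x \<in> minkowski_sum (supp f) (supp g). measure lebesgue (At_set f g t x))"

end

theory Submission
  imports Defs
begin

lemma emeasure_lborel_affine_image:
  fixes K :: "real set"
  assumes "K \<in> sets borel" "c > 0"
  shows "emeasure lborel ((\<lambda>x. c * x + d) ` K) = ennreal c * emeasure lborel K"
proof -
  have "emeasure lebesgue ((\<lambda>x. c *\<^sub>R x + d) ` K) = \<bar>c\<bar> ^ DIM(real) * emeasure lebesgue K"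
    by (rule emeasure_lebesgue_affine)
  moreover have "(\<lambda>x. c * x + d) ` K \<in> sets borel"
  proof -
    have "(\<lambda>x. c * x + d) ` K = (\<lambda>x. (x - d) / c) -` K" using assms(2)
      by (auto simp: image_iff field_simps intro!: bexI[of _ "(x - d)/c" for x])
    moreover have "(\<lambda>x. (x - d) / c) \<in> borel_measurable borel" by measurable
    ultimately show ?thesis using measurable_sets[of "\<lambda>x. (x - d) / c" borel borel K] assms(1) by simp
  qed
  ultimately show ?thesis using assms by (simp add: ennreal_mult)
qed

lemma bm1d_compact:
  fixes K K' C :: "real set"
  assumes "compact K" "compact K'" "K \<noteq> {}" "K' \<noteq> {}" "0<l" "l<1" "C \<in> sets borel"
    and sub: "\<And>x y. x\<in>K \<Longrightarrow> y\<in>K' \<Longrightarrow> l*x + (1-l)*y \<in> C"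
  shows "ennreal l * emeasure lborel K + ennreal (1-l) * emeasure lborel K' \<le> emeasure lborel C"
proof -
  obtain a where a: "a \<in> K" "\<And>x. x \<in> K \<Longrightarrow> x \<le> a"
    using compact_attains_sup[OF assms(1,3)] by blast
  obtain b where b: "b \<in> K'" "\<And>x. x \<in> K' \<Longrightarrow> b \<le> x"
    using compact_attains_inf[OF assms(2,4)] by blast
  define m where "m = l*a + (1-l)*b"
  define S1 where "S1 = (\<lambda>x. l * x + (1-l)*b) ` K"
  define S2 where "S2 = (\<lambda>y. (1-l) * y + l*a) ` K'"
  have KB: "K \<in> sets borel" "K' \<in> sets borel" using assms by (auto intro: borel_compact)
  have e1: "emeasure lborel S1 = ennreal l * emeasure lborel K"
    unfolding S1_def using emeasure_lborel_affine_image[OF KB(1) assms(5)] by simp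
  have e2: "emeasure lborel S2 = ennreal (1-l) * emeasure lborel K'"
    unfolding S2_def using emeasure_lborel_affine_image[OF KB(2)] assms(6) by simp
  have c1: "compact S1" unfolding S1_def
    by (intro compact_continuous_image continuous_intros assms)
  have c2: "compact S2" unfolding S2_def
    by (intro compact_continuous_image continuous_intros assms)
  have S1m: "S1 \<subseteq> {..m}" unfolding S1_def m_def using a assms(5) by (auto intro: mult_left_mono)
  have S2m: "S2 \<subseteq> {m..}"
  proof
    fix z assume "z \<in> S2"
    then obtain y where y: "y \<in> K'" "z = (1-l)*y + l*a" unfolding S2_def by auto
    have "(1-l)*b \<le> (1-l)*y" using b(2)[OF y(1)] assms(6) by (intro mult_left_mono) auto
    thus "z \<in> {m..}" using y unfolding m_def by auto
  qed
  have SC: "S1 \<union> (S2 - {m}) \<subseteq> C" unfolding S1_def S2_def using sub a b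
    by (auto simp: algebra_simps)
  have d: "S1 \<inter> (S2 - {m}) = {}" using S1m S2m by fastforce
  have B1: "S1 \<in> sets borel" "S2 - {m} \<in> sets borel" "S2 \<in> sets borel" using c1 c2 by (auto intro: borel_compact)
  have "emeasure lborel (S2 - {m}) = emeasure lborel S2"
    by (rule emeasure_Diff_null_set) (use B1 in auto)
  hence "emeasure lborel (S1 \<union> (S2 - {m})) = emeasure lborel S1 + emeasure lborel S2"
    using plus_emeasure[of S1 lborel "S2 - {m}"] B1 d by simp
  moreover have "emeasure lborel (S1 \<union> (S2 - {m})) \<le> emeasure lborel C"
    using SC assms(7) by (intro emeasure_mono) auto
  ultimately show ?thesis using e1 e2 by simp
qed


lemma inner_compact_lborel:
  fixes A :: "real set"
  assumes A: "A \<in> sets borel"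
  shows "emeasure lborel A \<le> (SUP K\<in>{K. K \<subseteq> A \<and> compact K}. emeasure lborel K)"
    (is "_ \<le> ?R")
proof -
  define AN where "AN N = A \<inter> {- real N..real N}" for N
  have ANb: "AN N \<in> sets borel" for N unfolding AN_def using A by auto
  have eqA: "(SUP N. emeasure lborel (AN N)) = emeasure lborel (\<Union>N. AN N)"
    by (rule SUP_emeasure_incseq) (use ANb in \<open>auto simp: incseq_def AN_def\<close>)
  moreover have eqU: "(\<Union>N. AN N) = A"
  proof (auto simp: AN_def)
    fix x assume "x \<in> A"
    obtain N :: nat where "\<bar>x\<bar> \<le> real N" using real_arch_simple by blast
    thus "\<exists>N. - real N \<le> x \<and> x \<le> real N" by (intro exI[of _ N]) auto
  qed
  moreover have le: "emeasure lborel (AN N) \<le> ?R" for N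
  proof (rule ennreal_le_epsilon)
    fix e :: real assume "0 < e"
    have "AN N \<in> sets lebesgue" using ANb by simp
    then obtain T where T: "closed T" "T \<subseteq> AN N" "AN N - T \<in> lmeasurable"
        "emeasure lebesgue (AN N - T) < ennreal e"
      using sets_lebesgue_inner_closed \<open>0 < e\<close> by metis
    have "compact T" using T(1,2) unfolding AN_def
      by (meson bounded_closed_interval bounded_subset compact_eq_bounded_closed inf.boundedE)
    have Tb: "T \<in> sets borel" using T(1) by auto
    have "emeasure lborel (AN N) = emeasure lborel T + emeasure lborel (AN N - T)"
      using plus_emeasure[of T lborel "AN N - T"] Tb ANb T(2)
      by (simp add: Un_absorb1)
    also have "emeasure lborel (AN N - T) \<le> ennreal e"
      using T(4) Tb ANb by simp
    also have "emeasure lborel T \<le> ?R"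
      using T(2) \<open>compact T\<close> unfolding AN_def by (intro SUP_upper) auto
    finally show "emeasure lborel (AN N) \<le> ?R + ennreal e" by (simp add: add_mono)
  qed
  have "(SUP N. emeasure lborel (AN N)) \<le> ?R" by (rule SUP_least) (rule le)
  thus ?thesis using eqA eqU by simp
qed


lemma SUP_bound_aux:
  fixes c y z :: ennreal
  assumes "S \<noteq> {}" "\<And>K. K\<in>S \<Longrightarrow> c * f K + y \<le> z"
  shows "c * (SUP K\<in>S. f K) + y \<le> z"
proof -
  have "c * (SUP K\<in>S. f K) + y = (SUP K\<in>S. c * f K + y)"
    by (simp add: SUP_mult_left_ennreal ennreal_SUP_add_left assms(1))
  then show ?thesis by (simp add: SUP_least assms)
qed

lemma bm1d:
  fixes A B C :: "real set"
  assumes "A \<in> sets borel" "B \<in> sets borel" "A \<noteq> {}" "B \<noteq> {}" "0<l" "l<1" "C \<in> sets borel"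
    and sub: "\<And>x y. x\<in>A \<Longrightarrow> y\<in>B \<Longrightarrow> l*x + (1-l)*y \<in> C"
  shows "ennreal l * emeasure lborel A + ennreal (1-l) * emeasure lborel B \<le> emeasure lborel C"
proof -
  obtain a0 b0 where ab: "a0 \<in> A" "b0 \<in> B" using assms(3,4) by blast
  have key: "ennreal l * emeasure lborel K + ennreal (1-l) * emeasure lborel K' \<le> emeasure lborel C"
    if "K \<subseteq> A" "compact K" "K' \<subseteq> B" "compact K'" for K K'
  proof -
    have "ennreal l * emeasure lborel K + ennreal (1-l) * emeasure lborel K'
      \<le> ennreal l * emeasure lborel (insert a0 K) + ennreal (1-l) * emeasure lborel (insert b0 K')"
      using that by (intro add_mono mult_left_mono emeasure_mono) (auto intro: borel_compact)
    also have "\<dots> \<le> emeasure lborel C"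
      using that ab assms sub by (intro bm1d_compact) auto
    finally show ?thesis .
  qed
  have k2: "ennreal l * emeasure lborel K + ennreal (1-l) * emeasure lborel B \<le> emeasure lborel C"
    if "K \<subseteq> A" "compact K" for K
  proof -
    have "ennreal (1-l) * emeasure lborel B + ennreal l * emeasure lborel K
       \<le> ennreal (1-l) * (SUP K\<in>{K. K \<subseteq> B \<and> compact K}. emeasure lborel K) + ennreal l * emeasure lborel K"
      using assms by (intro add_mono mult_left_mono inner_compact_lborel) auto
    also have "\<dots> \<le> emeasure lborel C"
      by (rule SUP_bound_aux) (use key that in \<open>auto simp: add.commute intro: exI[of _ "{}"]\<close>)
    finally show ?thesis by (simp add: add.commute)
  qed
  have "ennreal l * emeasure lborel A + ennreal (1-l) * emeasure lborel B
       \<le> ennreal l * (SUP K\<in>{K. K \<subseteq> A \<and> compact K}. emeasure lborel K) + ennreal (1-l) * emeasure lborel B"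
      using assms by (intro add_mono mult_left_mono inner_compact_lborel) auto
  also have "\<dots> \<le> emeasure lborel C"
      by (rule SUP_bound_aux) (use k2 in \<open>auto intro: exI[of _ "{}"]\<close>)
  finally show ?thesis .
qed


lemma emeasure_level_segment:
  fixes w :: ennreal
  shows "emeasure lborel {u::real. 0 \<le> u \<and> u < 1 \<and> ennreal u \<le> w} = min w 1"
proof (cases "w \<ge> 1")
  case True
  hence "{u::real. 0 \<le> u \<and> u < 1 \<and> ennreal u \<le> w} = {0..<1}"
    by (auto intro: order.trans[of _ 1 w] simp: ennreal_leI)
  thus ?thesis using True by (simp add: min_absorb2)
next
  case False
  then obtain r where r: "w = ennreal r" "0 \<le> r" "r < 1"
    by (cases w rule: ennreal_cases) (auto simp: not_le)
  hence "{u::real. 0 \<le> u \<and> u < 1 \<and> ennreal u \<le> w} = {0..r}"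
    by (auto simp: ennreal_le_iff)
  thus ?thesis using r by (simp add: min_absorb1 ennreal_leI)
qed

lemma layer_cake_min1:
  fixes F :: "real \<Rightarrow> ennreal"
  assumes [measurable]: "F \<in> borel_measurable borel"
  shows "(\<integral>\<^sup>+x. min (F x) 1 \<partial>lborel)
       = (\<integral>\<^sup>+u. indicator {0..<1} u * emeasure lborel {x. ennreal u \<le> F x} \<partial>lborel)"
proof -
  define P where "P x u = (indicator {(x,u). 0 \<le> u \<and> u < 1 \<and> ennreal u \<le> F x} (x,u) :: ennreal)" for x u :: real
  have Pm: "case_prod P \<in> borel_measurable (lborel \<Otimes>\<^sub>M lborel)"
    unfolding P_def by measurable
  have "(\<integral>\<^sup>+x. min (F x) 1 \<partial>lborel) = (\<integral>\<^sup>+x. (\<integral>\<^sup>+u. P x u \<partial>lborel) \<partial>lborel)"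
  proof (rule nn_integral_cong)
    fix x
    have "(\<integral>\<^sup>+u. P x u \<partial>lborel) = (\<integral>\<^sup>+u. indicator {u::real. 0 \<le> u \<and> u < 1 \<and> ennreal u \<le> F x} u \<partial>lborel)"
      by (rule nn_integral_cong) (auto simp: P_def indicator_def)
    also have "\<dots> = min (F x) 1" by (subst nn_integral_indicator) (auto simp: emeasure_level_segment)
    finally show "min (F x) 1 = (\<integral>\<^sup>+u. P x u \<partial>lborel)" by simp
  qed
  also have "\<dots> = (\<integral>\<^sup>+u. (\<integral>\<^sup>+x. P x u \<partial>lborel) \<partial>lborel)"
    using lborel_pair.Fubini'[OF Pm] by simp
  also have "\<dots> = (\<integral>\<^sup>+u. indicator {0..<1} u * emeasure lborel {x. ennreal u \<le> F x} \<partial>lborel)"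
  proof (rule nn_integral_cong)
    fix u :: real
    have "(\<integral>\<^sup>+x. P x u \<partial>lborel) = (\<integral>\<^sup>+x. indicator {0..<1} u * indicator {x. ennreal u \<le> F x} x \<partial>lborel)"
      by (rule nn_integral_cong) (auto simp: P_def indicator_def)
    also have "\<dots> = indicator {0..<1} u * emeasure lborel {x. ennreal u \<le> F x}"
      by (subst nn_integral_cmult_indicator) auto
    finally show "(\<integral>\<^sup>+x. P x u \<partial>lborel) = indicator {0..<1} u * emeasure lborel {x. ennreal u \<le> F x}" .
  qed
  finally show ?thesis .
qed


lemma level_measure_measurable:
  fixes F :: "real \<Rightarrow> ennreal"
  assumes [measurable]: "F \<in> borel_measurable borel"
  shows "(\<lambda>u. emeasure lborel {x. ennreal u \<le> F x}) \<in> borel_measurable lborel"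
proof -
  have Q0: "{p \<in> space (lborel \<Otimes>\<^sub>M lborel). ennreal (fst p) \<le> F (snd p)} \<in> sets (lborel \<Otimes>\<^sub>M lborel)"
    by measurable
  have Q: "{(u,x). ennreal u \<le> F x} \<in> sets (lborel \<Otimes>\<^sub>M lborel)"
    using Q0 by (simp add: space_pair_measure case_prod_beta')
  have "(\<lambda>u. emeasure lborel (Pair u -` {(u,x). ennreal u \<le> F x})) \<in> borel_measurable lborel"
    by (rule lborel.measurable_emeasure_Pair[OF Q])
  thus ?thesis by (simp add: vimage_def)
qed

lemma pl1d_core:
  fixes F G H :: "real \<Rightarrow> ennreal"
  assumes [measurable]: "F \<in> borel_measurable borel" "G \<in> borel_measurable borel" "H \<in> borel_measurable borel"
    and l: "0<l" "l<1"
    and hyp: "\<And>x y u. 0 \<le> u \<Longrightarrow> ennreal u \<le> F x \<Longrightarrow> ennreal u \<le> G y \<Longrightarrow> ennreal u \<le> H (l*x + (1-l)*y)"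
    and F1: "\<exists>x. 1 \<le> F x" and G1: "\<exists>y. 1 \<le> G y"
  shows "ennreal l * (\<integral>\<^sup>+x. min (F x) 1 \<partial>lborel) + ennreal (1-l) * (\<integral>\<^sup>+x. min (G x) 1 \<partial>lborel)
         \<le> (\<integral>\<^sup>+x. H x \<partial>lborel)"
proof -
  note mF = level_measure_measurable[of F] and mG = level_measure_measurable[of G]
  have "ennreal l * (\<integral>\<^sup>+x. min (F x) 1 \<partial>lborel) + ennreal (1-l) * (\<integral>\<^sup>+x. min (G x) 1 \<partial>lborel)
     = (\<integral>\<^sup>+u. ennreal l * (indicator {0..<1} u * emeasure lborel {x. ennreal u \<le> F x}) \<partial>lborel)
       + (\<integral>\<^sup>+u. ennreal (1-l) * (indicator {0..<1} u * emeasure lborel {x. ennreal u \<le> G x}) \<partial>lborel)"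
    using mF mG by (simp add: layer_cake_min1 nn_integral_cmult)
  also have "\<dots> = (\<integral>\<^sup>+u. ennreal l * (indicator {0..<1} u * emeasure lborel {x. ennreal u \<le> F x})
       + ennreal (1-l) * (indicator {0..<1} u * emeasure lborel {x. ennreal u \<le> G x}) \<partial>lborel)"
    using mF mG by (intro nn_integral_add[symmetric]) auto
  also have "\<dots> \<le> (\<integral>\<^sup>+u. indicator {0..<1} u * emeasure lborel {x. ennreal u \<le> H x} \<partial>lborel)"
  proof (rule nn_integral_mono)
    fix u :: real
    show "ennreal l * (indicator {0..<1} u * emeasure lborel {x. ennreal u \<le> F x})
       + ennreal (1-l) * (indicator {0..<1} u * emeasure lborel {x. ennreal u \<le> G x})
       \<le> indicator {0..<1} u * emeasure lborel {x. ennreal u \<le> H x}"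
    proof (cases "u \<in> {0..<1}")
      case True
      have u1: "ennreal u \<le> 1" using True by simp
      have ne: "{x. ennreal u \<le> F x} \<noteq> {}" "{x. ennreal u \<le> G x} \<noteq> {}"
        using F1 G1 order.trans[OF u1] by auto
      have "ennreal l * emeasure lborel {x. ennreal u \<le> F x} + ennreal (1-l) * emeasure lborel {x. ennreal u \<le> G x}
          \<le> emeasure lborel {x. ennreal u \<le> H x}"
        using ne l True hyp by (intro bm1d) auto
      thus ?thesis using True by simp
    qed simp
  qed
  also have "\<dots> = (\<integral>\<^sup>+x. min (H x) 1 \<partial>lborel)" by (simp add: layer_cake_min1)
  also have "\<dots> \<le> (\<integral>\<^sup>+x. H x \<partial>lborel)" by (intro nn_integral_mono) auto
  finally show ?thesis .
qed


lemma trunc_approx: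
  fixes F :: "real \<Rightarrow> ennreal"
  assumes [measurable]: "F \<in> borel_measurable borel" and c: "ennreal c < (\<integral>\<^sup>+x. F x \<partial>lborel)"
  shows "\<exists>p>0. (\<exists>x. ennreal p < F x) \<and> ennreal c < (\<integral>\<^sup>+x. min (F x) (ennreal p) \<partial>lborel)"
proof -
  define S where "S = (SUP x. F x)"
  have FS: "F x \<le> S" for x unfolding S_def by (rule SUP_upper) auto
  have "S \<noteq> 0"
  proof
    assume "S = 0"
    hence "\<And>x. F x = 0" using FS by (metis le_zero_eq)
    thus False using c by simp
  qed
  hence "0 < S" using not_gr_zero by blast
  hence ne: "{..<S} \<noteq> {}" by blast
  have SS: "Sup {..<S} = S"
    by (rule Sup_eqI) (auto intro: dense_le)
  obtain f :: "nat \<Rightarrow> ennreal" where f: "incseq f" "range f \<subseteq> {..<S}" "Sup {..<S} = (SUP i. f i)"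
    using ennreal_Sup_countable_SUP[OF ne] by blast
  have "(\<integral>\<^sup>+x. F x \<partial>lborel) = (\<integral>\<^sup>+x. (SUP i. min (F x) (f i)) \<partial>lborel)"
  proof (rule nn_integral_cong)
    fix x
    have "(SUP i. min (F x) (f i)) = inf (F x) (SUP i. f i)"
      using inf_SUP[of "F x" f UNIV] by (simp add: inf_min)
    also have "\<dots> = F x" using f(3) SS FS[of x] by (simp add: inf_min min_absorb1)
    finally show "F x = (SUP i. min (F x) (f i))" by simp
  qed
  also have "\<dots> = (SUP i. (\<integral>\<^sup>+x. min (F x) (f i) \<partial>lborel))"
    by (rule nn_integral_monotone_convergence_SUP) (use f(1) in \<open>auto simp: incseq_def le_fun_def min.coboundedI2\<close>)
  finally obtain i where i: "ennreal c < (\<integral>\<^sup>+x. min (F x) (f i) \<partial>lborel)"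
    using c by (auto simp: less_SUP_iff)
  have "f i < S" using f(2) by auto
  then obtain x where x: "f i < F x" unfolding S_def by (auto simp: less_SUP_iff)
  have "f i < top" using \<open>f i < S\<close> top.not_eq_extremum by fastforce
  then obtain p where p: "f i = ennreal p" "0 \<le> p" by (cases "f i" rule: ennreal_cases) auto
  have "p \<noteq> 0"
  proof
    assume "p = 0"
    hence "(\<integral>\<^sup>+x. min (F x) (f i) \<partial>lborel) = 0" using p by simp
    thus False using i by simp
  qed
  thus ?thesis using p x i by (intro exI[of _ p]) auto
qed


lemma min_mult_ennreal: "min a b * (c::ennreal) = min (a*c) (b*c)"
proof (cases "a \<le> b")
  case True
  then have "a*c \<le> b*c" by (rule mult_right_mono) simp
  with True show ?thesis by (simp add: min_def)
next
  case False
  hence "b \<le> a" by simp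
  hence "b*c \<le> a*c" by (rule mult_right_mono) simp
  with False show ?thesis by (auto simp: min_def intro: antisym)
qed

lemma ennreal_mult_inv_cancel: "0 < p \<Longrightarrow> X * ennreal (1/p) * ennreal p = X"
  by (simp add: mult.assoc ennreal_mult[symmetric])

lemma ennreal_le_mult_inv: "0 < p \<Longrightarrow> 0 \<le> u \<Longrightarrow> ennreal u \<le> X * ennreal (1/p) \<Longrightarrow> ennreal (u*p) \<le> X"
  by (metis ennreal_mult'' ennreal_mult_inv_cancel less_le mult_right_mono zero_le)

lemma pl1d:
  fixes F G H :: "real \<Rightarrow> ennreal"
  assumes [measurable]: "F \<in> borel_measurable borel" "G \<in> borel_measurable borel" "H \<in> borel_measurable borel"
    and l: "0<l" "l<1"
    and hyp: "\<And>x y a b. 0 \<le> a \<Longrightarrow> 0 \<le> b \<Longrightarrow> ennreal a \<le> F x \<Longrightarrow> ennreal b \<le> G y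
               \<Longrightarrow> ennreal (a powr l * b powr (1-l)) \<le> H (l*x + (1-l)*y)"
    and ab: "0 \<le> a" "0 \<le> b" "ennreal a \<le> (\<integral>\<^sup>+x. F x \<partial>lborel)" "ennreal b \<le> (\<integral>\<^sup>+x. G x \<partial>lborel)"
  shows "ennreal (a powr l * b powr (1-l)) \<le> (\<integral>\<^sup>+x. H x \<partial>lborel)"
proof (cases "a = 0 \<or> b = 0")
  case True thus ?thesis by auto
next
  case False
  hence a0: "a > 0" and b0: "b > 0" using ab by auto
  define T where "T = a powr l * b powr (1-l)"
  have main: "ennreal (\<theta> * T) \<le> (\<integral>\<^sup>+x. H x \<partial>lborel)" if th: "0 < \<theta>" "\<theta> < 1" for \<theta>
  proof -
    have ta: "ennreal (\<theta>*a) < (\<integral>\<^sup>+x. F x \<partial>lborel)"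
      using ab a0 th by (intro less_le_trans[OF _ ab(3)]) (simp add: ennreal_less_iff)
    then obtain p where p: "p > 0" "\<exists>x. ennreal p < F x" "ennreal (\<theta>*a) < (\<integral>\<^sup>+x. min (F x) (ennreal p) \<partial>lborel)"
      using trunc_approx[OF assms(1) ta] by blast
    have tb: "ennreal (\<theta>*b) < (\<integral>\<^sup>+x. G x \<partial>lborel)"
      using ab b0 th by (intro less_le_trans[OF _ ab(4)]) (simp add: ennreal_less_iff)
    then obtain q where q: "q > 0" "\<exists>x. ennreal q < G x" "ennreal (\<theta>*b) < (\<integral>\<^sup>+x. min (G x) (ennreal q) \<partial>lborel)"
      using trunc_approx[OF assms(2) tb] by blast
    define c0 where "c0 = p powr l * q powr (1-l)"
    have c0: "c0 > 0" unfolding c0_def using p q by simp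
    define F1 where "F1 x = F x * ennreal (1/p)" for x
    define G1 where "G1 x = G x * ennreal (1/q)" for x
    define H1 where "H1 x = H x * ennreal (1/c0)" for x
    have [measurable]: "F1 \<in> borel_measurable borel" "G1 \<in> borel_measurable borel" "H1 \<in> borel_measurable borel"
      unfolding F1_def G1_def H1_def by measurable
    have hyp1: "ennreal u \<le> H1 (l*x + (1-l)*y)"
      if u: "0 \<le> u" "ennreal u \<le> F1 x" "ennreal u \<le> G1 y" for x y u
    proof -
      have "ennreal (u*p) \<le> F x" using ennreal_le_mult_inv[OF p(1) u(1)] u(2) unfolding F1_def by simp
      moreover have "ennreal (u*q) \<le> G y" using ennreal_le_mult_inv[OF q(1) u(1)] u(3) unfolding G1_def by simp
      ultimately have *: "ennreal ((u*p) powr l * (u*q) powr (1-l)) \<le> H (l*x + (1-l)*y)"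
        using hyp u p q by simp
      have "(u*p) powr l * (u*q) powr (1-l) = u * c0"
      proof (cases "u = 0")
        case False
        hence "(u*p) powr l * (u*q) powr (1-l) = (u powr l * u powr (1-l)) * c0"
          using u p q by (simp add: powr_mult c0_def)
        also have "u powr l * u powr (1-l) = u" using False u by (simp add: powr_add[symmetric])
        finally show ?thesis .
      qed simp
      hence "ennreal (u * c0) * ennreal (1/c0) \<le> H1 (l*x + (1-l)*y)"
        using * unfolding H1_def by (intro mult_right_mono) auto
      moreover have "ennreal (u * c0) * ennreal (1/c0) = ennreal u"
        using c0 u by (simp add: ennreal_mult[symmetric])
      ultimately show ?thesis by simp
    qed
    have F11: "\<exists>x. 1 \<le> F1 x"
    proof -
      obtain x where "ennreal p < F x" using p by auto
      hence "ennreal p * ennreal (1/p) \<le> F1 x" unfolding F1_def by (intro mult_right_mono) auto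
      thus ?thesis using p by (auto simp: ennreal_mult[symmetric])
    qed
    have G11: "\<exists>x. 1 \<le> G1 x"
    proof -
      obtain x where "ennreal q < G x" using q by auto
      hence "ennreal q * ennreal (1/q) \<le> G1 x" unfolding G1_def by (intro mult_right_mono) auto
      thus ?thesis using q by (auto simp: ennreal_mult[symmetric])
    qed
    have core: "ennreal l * (\<integral>\<^sup>+x. min (F1 x) 1 \<partial>lborel) + ennreal (1-l) * (\<integral>\<^sup>+x. min (G1 x) 1 \<partial>lborel)
         \<le> (\<integral>\<^sup>+x. H1 x \<partial>lborel)"
      by (rule pl1d_core) (use l hyp1 F11 G11 in auto)
    have iF: "(\<integral>\<^sup>+x. min (F1 x) 1 \<partial>lborel) = (\<integral>\<^sup>+x. min (F x) (ennreal p) \<partial>lborel) * ennreal (1/p)"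
    proof -
      have "(\<integral>\<^sup>+x. min (F1 x) 1 \<partial>lborel) = (\<integral>\<^sup>+x. min (F x) (ennreal p) * ennreal (1/p) \<partial>lborel)"
        using p by (intro nn_integral_cong) (simp add: F1_def min_mult_ennreal ennreal_mult[symmetric])
      also have "\<dots> = (\<integral>\<^sup>+x. min (F x) (ennreal p) \<partial>lborel) * ennreal (1/p)"
        by (rule nn_integral_multc) measurable
      finally show ?thesis .
    qed
    have iG: "(\<integral>\<^sup>+x. min (G1 x) 1 \<partial>lborel) = (\<integral>\<^sup>+x. min (G x) (ennreal q) \<partial>lborel) * ennreal (1/q)"
    proof -
      have "(\<integral>\<^sup>+x. min (G1 x) 1 \<partial>lborel) = (\<integral>\<^sup>+x. min (G x) (ennreal q) * ennreal (1/q) \<partial>lborel)"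
        using q by (intro nn_integral_cong) (simp add: G1_def min_mult_ennreal ennreal_mult[symmetric])
      also have "\<dots> = (\<integral>\<^sup>+x. min (G x) (ennreal q) \<partial>lborel) * ennreal (1/q)"
        by (rule nn_integral_multc) measurable
      finally show ?thesis .
    qed
    have iH: "(\<integral>\<^sup>+x. H1 x \<partial>lborel) = (\<integral>\<^sup>+x. H x \<partial>lborel) * ennreal (1/c0)"
      unfolding H1_def by (rule nn_integral_multc) measurable
    have lowF: "ennreal (\<theta>*a/p) \<le> (\<integral>\<^sup>+x. min (F1 x) 1 \<partial>lborel)"
    proof -
      have "ennreal (\<theta>*a) * ennreal (1/p) \<le> (\<integral>\<^sup>+x. min (F x) (ennreal p) \<partial>lborel) * ennreal (1/p)"
        using p(3) by (intro mult_right_mono) auto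
      thus ?thesis using iF a0 th p by (simp add: ennreal_mult[symmetric])
    qed
    have lowG: "ennreal (\<theta>*b/q) \<le> (\<integral>\<^sup>+x. min (G1 x) 1 \<partial>lborel)"
    proof -
      have "ennreal (\<theta>*b) * ennreal (1/q) \<le> (\<integral>\<^sup>+x. min (G x) (ennreal q) \<partial>lborel) * ennreal (1/q)"
        using q(3) by (intro mult_right_mono) auto
      thus ?thesis using iG b0 th q by (simp add: ennreal_mult[symmetric])
    qed
    have young: "(\<theta>*a/p) powr l * (\<theta>*b/q) powr (1-l) \<le> l * (\<theta>*a/p) + (1-l) * (\<theta>*b/q)"
      using l a0 b0 th p q by (intro Youngs_inequality_0) auto
    have eqT: "(\<theta>*a/p) powr l * (\<theta>*b/q) powr (1-l) = \<theta> * T / c0"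
    proof -
      have "(\<theta>*a/p) powr l * (\<theta>*b/q) powr (1-l)
          = (\<theta> powr l * \<theta> powr (1-l)) * (a powr l * b powr (1-l)) / (p powr l * q powr (1-l))"
        using a0 b0 th p q by (simp add: powr_divide powr_mult)
      also have "\<theta> powr l * \<theta> powr (1-l) = \<theta>" using th by (simp add: powr_add[symmetric])
      finally show ?thesis unfolding T_def c0_def by simp
    qed
    have "ennreal (\<theta> * T / c0) \<le> ennreal (l * (\<theta>*a/p) + (1-l) * (\<theta>*b/q))"
      using young eqT by (intro ennreal_leI) simp
    also have "\<dots> = ennreal l * ennreal (\<theta>*a/p) + ennreal (1-l) * ennreal (\<theta>*b/q)"
    proof -
      have n1: "0 \<le> l * (\<theta>*a/p)" "0 \<le> (1-l) * (\<theta>*b/q)" "0 \<le> \<theta>*a/p" "0 \<le> \<theta>*b/q"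
        using l a0 b0 th p q by auto
      show ?thesis using ennreal_plus[OF n1(1,2)] ennreal_mult[OF _ n1(3), of l] ennreal_mult[OF _ n1(4), of "1-l"] l
        by simp
    qed
    also have "\<dots> \<le> ennreal l * (\<integral>\<^sup>+x. min (F1 x) 1 \<partial>lborel) + ennreal (1-l) * (\<integral>\<^sup>+x. min (G1 x) 1 \<partial>lborel)"
      using lowF lowG by (intro add_mono mult_left_mono) auto
    also have "\<dots> \<le> (\<integral>\<^sup>+x. H x \<partial>lborel) * ennreal (1/c0)" using core iH by simp
    finally have "ennreal (\<theta> * T / c0) * ennreal c0 \<le> (\<integral>\<^sup>+x. H x \<partial>lborel) * ennreal (1/c0) * ennreal c0"
      by (intro mult_right_mono) auto
    moreover have "ennreal (\<theta> * T / c0) * ennreal c0 = ennreal (\<theta> * T)"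
    proof -
      have "0 \<le> \<theta> * T / c0" using th c0 unfolding T_def by auto
      hence "ennreal (\<theta> * T / c0) * ennreal c0 = ennreal (\<theta> * T / c0 * c0)"
        using c0 ennreal_mult[of "\<theta> * T / c0" c0] by simp
      thus ?thesis using c0 by simp
    qed
    ultimately show ?thesis using c0 by (simp add: ennreal_mult_inv_cancel)
  qed
  show ?thesis
  proof (cases "(\<integral>\<^sup>+x. H x \<partial>lborel) = top")
    case True thus ?thesis by simp
  next
    case False
    then obtain r where r: "(\<integral>\<^sup>+x. H x \<partial>lborel) = ennreal r" "0 \<le> r"
      by (cases "(\<integral>\<^sup>+x. H x \<partial>lborel)" rule: ennreal_cases) auto
    have "T \<le> r"
    proof (rule field_le_mult_one_interval)
      fix z :: real assume "0 < z" "z < 1"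
      thus "z * T \<le> r" using main[of z] r by (simp add: ennreal_le_iff)
    qed
    thus ?thesis using r unfolding T_def by (simp add: ennreal_leI)
  qed
qed


lemma pl_PiM:
  fixes I :: "'i set"
  assumes "finite I" and l: "0 < l" "l < 1"
  shows "\<And>F G H a b. F \<in> borel_measurable (PiM I (\<lambda>_. lborel :: real measure))
     \<Longrightarrow> G \<in> borel_measurable (PiM I (\<lambda>_. lborel :: real measure))
     \<Longrightarrow> H \<in> borel_measurable (PiM I (\<lambda>_. lborel :: real measure))
     \<Longrightarrow> (\<And>x y a b. 0 \<le> a \<Longrightarrow> 0 \<le> b \<Longrightarrow> ennreal a \<le> F x \<Longrightarrow> ennreal b \<le> G y
            \<Longrightarrow> ennreal (a powr l * b powr (1-l)) \<le> H (\<lambda>j. l * x j + (1-l) * y j))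
     \<Longrightarrow> 0 \<le> a \<Longrightarrow> 0 \<le> b \<Longrightarrow> ennreal a \<le> integral\<^sup>N (PiM I (\<lambda>_. lborel)) F
     \<Longrightarrow> ennreal b \<le> integral\<^sup>N (PiM I (\<lambda>_. lborel)) G
     \<Longrightarrow> ennreal (a powr l * b powr (1-l)) \<le> integral\<^sup>N (PiM I (\<lambda>_. lborel)) H"
  using assms(1)
proof (induction I rule: finite_induct)
  case empty
  let ?u = "(\<lambda>_. undefined) :: 'i \<Rightarrow> real"
  have int: "integral\<^sup>N (PiM {} (\<lambda>_. lborel :: real measure)) K = K ?u" for K :: "('i \<Rightarrow> real) \<Rightarrow> ennreal"
    by (simp add: PiM_empty nn_integral_count_space_finite)
  have "(\<lambda>j. l * ?u j + (1-l) * ?u j) = ?u" by (auto simp: algebra_simps)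
  thus ?case using empty.prems(4)[of a b ?u ?u] empty.prems(5-8) by (simp add: int)
next
  case (insert i I)
  interpret product_sigma_finite "\<lambda>_::'i. lborel :: real measure" by standard
  note Fm[measurable] = insert.prems(1) and Gm[measurable] = insert.prems(2) and Hm[measurable] = insert.prems(3)
  have upd_m: "(\<lambda>x. x(i := y)) \<in> measurable (PiM I (\<lambda>_. lborel)) (PiM (insert i I) (\<lambda>_. lborel :: real measure))" for y :: real
    by (rule measurable_fun_upd[where J=I]) auto
  have upd_m2: "(\<lambda>p. (snd p)(i := fst p)) \<in> measurable (lborel \<Otimes>\<^sub>M PiM I (\<lambda>_. lborel)) (PiM (insert i I) (\<lambda>_. lborel :: real measure))"
    by (rule measurable_fun_upd[where J=I]) auto
  have sec_m: "(\<lambda>y. \<integral>\<^sup>+x. K (x(i := y)) \<partial>PiM I (\<lambda>_. lborel)) \<in> borel_measurable borel"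
    if [measurable]: "K \<in> borel_measurable (PiM (insert i I) (\<lambda>_. lborel :: real measure))" for K
  proof -
    interpret PI: sigma_finite_measure "PiM I (\<lambda>_. lborel :: real measure)"
      using insert.hyps(1) by (intro sigma_finite) 
    have "(\<lambda>(y, x). K (x(i := y))) \<in> borel_measurable (lborel \<Otimes>\<^sub>M PiM I (\<lambda>_. lborel))"
      using measurable_comp[OF upd_m2 that] by (simp add: comp_def case_prod_beta')
    hence "(\<lambda>y. \<integral>\<^sup>+x. K (x(i := y)) \<partial>PiM I (\<lambda>_. lborel)) \<in> borel_measurable lborel"
      by (rule PI.borel_measurable_nn_integral)
    thus ?thesis by simp
  qed
  have sl_m: "(\<lambda>x. K (x(i := y))) \<in> borel_measurable (PiM I (\<lambda>_. lborel))"
    if "K \<in> borel_measurable (PiM (insert i I) (\<lambda>_. lborel :: real measure))" for K y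
    using measurable_comp[OF upd_m that] by (simp add: comp_def)
  define F' where "F' y = (\<integral>\<^sup>+x. F (x(i := y)) \<partial>PiM I (\<lambda>_. lborel))" for y
  define G' where "G' y = (\<integral>\<^sup>+x. G (x(i := y)) \<partial>PiM I (\<lambda>_. lborel))" for y
  define H' where "H' y = (\<integral>\<^sup>+x. H (x(i := y)) \<partial>PiM I (\<lambda>_. lborel))" for y
  have eqF: "integral\<^sup>N (PiM (insert i I) (\<lambda>_. lborel)) F = (\<integral>\<^sup>+y. F' y \<partial>lborel)"
    unfolding F'_def using insert.hyps by (intro product_nn_integral_insert_rev) auto
  have eqG: "integral\<^sup>N (PiM (insert i I) (\<lambda>_. lborel)) G = (\<integral>\<^sup>+y. G' y \<partial>lborel)"
    unfolding G'_def using insert.hyps by (intro product_nn_integral_insert_rev) auto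
  have eqH: "integral\<^sup>N (PiM (insert i I) (\<lambda>_. lborel)) H = (\<integral>\<^sup>+y. H' y \<partial>lborel)"
    unfolding H'_def using insert.hyps by (intro product_nn_integral_insert_rev) auto
  have hyp1: "ennreal (a' powr l * b' powr (1-l)) \<le> H' (l*y1 + (1-l)*y2)"
    if ab': "0 \<le> a'" "0 \<le> b'" "ennreal a' \<le> F' y1" "ennreal b' \<le> G' y2" for y1 y2 a' b'
    unfolding H'_def
  proof (rule insert.IH)
    show "(\<lambda>x. F (x(i := y1))) \<in> borel_measurable (PiM I (\<lambda>_. lborel))" by (rule sl_m) fact
    show "(\<lambda>x. G (x(i := y2))) \<in> borel_measurable (PiM I (\<lambda>_. lborel))" by (rule sl_m) fact
    show "(\<lambda>x. H (x(i := l*y1 + (1-l)*y2))) \<in> borel_measurable (PiM I (\<lambda>_. lborel))" by (rule sl_m) fact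
    fix x y a b assume h: "0 \<le> a" "0 \<le> b" "ennreal a \<le> F (x(i := y1))" "ennreal b \<le> G (y(i := y2))"
    have "(\<lambda>j. l * (x(i := y1)) j + (1-l) * (y(i := y2)) j) = (\<lambda>j. l * x j + (1-l) * y j)(i := l*y1 + (1-l)*y2)"
      by auto
    thus "ennreal (a powr l * b powr (1-l)) \<le> H ((\<lambda>j. l * x j + (1-l) * y j)(i := l*y1 + (1-l)*y2))"
      using insert.prems(4)[OF h] by simp
  qed (insert ab'[unfolded F'_def G'_def], assumption+)
  show ?case unfolding eqH
  proof (rule pl1d[of F' G' H' l])
    show "F' \<in> borel_measurable borel" unfolding F'_def by (rule sec_m) fact
    show "G' \<in> borel_measurable borel" unfolding G'_def by (rule sec_m) fact
    show "H' \<in> borel_measurable borel" unfolding H'_def by (rule sec_m) fact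
    show "\<And>x y a b. 0 \<le> a \<Longrightarrow> 0 \<le> b \<Longrightarrow> ennreal a \<le> F' x \<Longrightarrow> ennreal b \<le> G' y
        \<Longrightarrow> ennreal (a powr l * b powr (1-l)) \<le> H' (l*x + (1-l)*y)" by (rule hyp1)
  qed (use insert.prems(5-8) eqF eqG l in auto)
qed


lemma pl_euclid:
  fixes F G H :: "'a::euclidean_space \<Rightarrow> ennreal"
  assumes [measurable]: "F \<in> borel_measurable borel" "G \<in> borel_measurable borel" "H \<in> borel_measurable borel"
    and l: "0<l" "l<1"
    and hyp: "\<And>x y a b. 0 \<le> a \<Longrightarrow> 0 \<le> b \<Longrightarrow> ennreal a \<le> F x \<Longrightarrow> ennreal b \<le> G y
               \<Longrightarrow> ennreal (a powr l * b powr (1-l)) \<le> H (l *\<^sub>R x + (1-l) *\<^sub>R y)"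
    and ab: "0 \<le> a" "0 \<le> b" "ennreal a \<le> (\<integral>\<^sup>+x. F x \<partial>lborel)" "ennreal b \<le> (\<integral>\<^sup>+x. G x \<partial>lborel)"
  shows "ennreal (a powr l * b powr (1-l)) \<le> (\<integral>\<^sup>+x. H x \<partial>lborel)"
proof -
  define \<phi> :: "('a \<Rightarrow> real) \<Rightarrow> 'a" where "\<phi> f = (\<Sum>b\<in>Basis. f b *\<^sub>R b)" for f
  have \<phi>m[measurable]: "\<phi> \<in> measurable (PiM Basis (\<lambda>_. lborel)) borel"
    unfolding \<phi>_def by measurable
  have eq: "integral\<^sup>N lborel K = integral\<^sup>N (PiM Basis (\<lambda>_. lborel)) (\<lambda>f. K (\<phi> f))"
    if [measurable]: "K \<in> borel_measurable borel" for K :: "'a \<Rightarrow> ennreal"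
  proof -
    have "integral\<^sup>N (lborel :: 'a measure) K = integral\<^sup>N (distr (PiM Basis (\<lambda>_. lborel)) borel \<phi>) K"
      unfolding \<phi>_def by (subst lborel_eq) (rule refl)
    also have "\<dots> = integral\<^sup>N (PiM Basis (\<lambda>_. lborel)) (\<lambda>f. K (\<phi> f))"
      by (rule nn_integral_distr) measurable
    finally show ?thesis .
  qed
  have lin: "\<phi> (\<lambda>j. l * x j + (1-l) * y j) = l *\<^sub>R \<phi> x + (1-l) *\<^sub>R \<phi> y" for x y
    unfolding \<phi>_def by (simp add: scaleR_sum_right sum.distrib[symmetric] scaleR_add_left)
  show ?thesis
    unfolding eq[OF assms(3)]
  proof (rule pl_PiM[OF finite_Basis l, of "\<lambda>f. F (\<phi> f)" "\<lambda>f. G (\<phi> f)"])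
    show "(\<lambda>f. F (\<phi> f)) \<in> borel_measurable (PiM Basis (\<lambda>_. lborel))" by measurable
    show "(\<lambda>f. G (\<phi> f)) \<in> borel_measurable (PiM Basis (\<lambda>_. lborel))" by measurable
    show "(\<lambda>f. H (\<phi> f)) \<in> borel_measurable (PiM Basis (\<lambda>_. lborel))" by measurable
    show "\<And>x y a b. 0 \<le> a \<Longrightarrow> 0 \<le> b \<Longrightarrow> ennreal a \<le> F (\<phi> x) \<Longrightarrow> ennreal b \<le> G (\<phi> y)
        \<Longrightarrow> ennreal (a powr l * b powr (1-l)) \<le> H (\<phi> (\<lambda>j. l * x j + (1-l) * y j))"
      unfolding lin by (rule hyp)
  qed (use ab eq[OF assms(1)] eq[OF assms(2)] in auto)
qed


lemma convex_lebesgue: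
  fixes S :: "'a::euclidean_space set"
  assumes "convex S"
  shows "S \<in> sets lebesgue"
    and "emeasure lebesgue (interior S) = emeasure lebesgue S"
    and "emeasure lebesgue (closure S) = emeasure lebesgue S"
proof -
  have nf: "frontier S \<in> null_sets lebesgue"
    using negligible_convex_frontier[OF assms] negligible_iff_null_sets by blast
  have n1: "S - interior S \<in> null_sets lebesgue"
    using negligible_subset[OF negligible_convex_frontier[OF assms], of "S - interior S"]
    by (auto simp: negligible_iff_null_sets frontier_def dest: subsetD[OF closure_subset])
  have io: "interior S \<in> sets lebesgue" by (simp add: borel_open)
  have eqS: "S = interior S \<union> (S - interior S)" using interior_subset by blast
  have X: "interior S \<union> (S - interior S) \<in> sets lebesgue" using io n1 by (intro sets.Un) auto
  show "S \<in> sets lebesgue" using X interior_subset[of S] by (simp add: Un_absorb1)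
  have "emeasure lebesgue (interior S \<union> (S - interior S)) = emeasure lebesgue (interior S)"
    by (rule emeasure_Un_null_set[OF io n1])
  thus "emeasure lebesgue (interior S) = emeasure lebesgue S" using eqS by simp
  have eqC: "closure S = interior S \<union> frontier S" unfolding frontier_def using interior_subset closure_subset by blast
  have "emeasure lebesgue (interior S \<union> frontier S) = emeasure lebesgue (interior S)"
    by (rule emeasure_Un_null_set[OF io nf])
  thus "emeasure lebesgue (closure S) = emeasure lebesgue S" using eqC \<open>emeasure lebesgue (interior S) = emeasure lebesgue S\<close> by simp
qed

lemma bm_mult:
  fixes A B C :: "'a::euclidean_space set"
  assumes cvx: "convex A" "convex B" "convex C" and l: "0<l" "l<1"
    and sub: "\<And>x y. x \<in> A \<Longrightarrow> y \<in> B \<Longrightarrow> l *\<^sub>R x + (1-l) *\<^sub>R y \<in> C"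
    and ab: "0 \<le> a" "0 \<le> b" "ennreal a \<le> emeasure lebesgue A" "ennreal b \<le> emeasure lebesgue B"
  shows "ennreal (a powr l * b powr (1-l)) \<le> emeasure lebesgue C"
proof -
  define F where "F = (indicator (interior A) :: 'a \<Rightarrow> ennreal)"
  define G where "G = (indicator (interior B) :: 'a \<Rightarrow> ennreal)"
  define H where "H = (indicator (closure C) :: 'a \<Rightarrow> ennreal)"
  have [measurable]: "F \<in> borel_measurable borel" "G \<in> borel_measurable borel" "H \<in> borel_measurable borel"
    unfolding F_def G_def H_def by (auto intro!: borel_measurable_indicator borel_open borel_closed)
  have iF: "(\<integral>\<^sup>+x. F x \<partial>lborel) = emeasure lebesgue A"
    unfolding F_def using convex_lebesgue(2)[OF cvx(1)] by (simp add: borel_open)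
  have iG: "(\<integral>\<^sup>+x. G x \<partial>lborel) = emeasure lebesgue B"
    unfolding G_def using convex_lebesgue(2)[OF cvx(2)] by (simp add: borel_open)
  have iH: "(\<integral>\<^sup>+x. H x \<partial>lborel) = emeasure lebesgue C"
    unfolding H_def using convex_lebesgue(3)[OF cvx(3)] by (simp add: borel_closed)
  have hyp: "ennreal (a' powr l * b' powr (1-l)) \<le> H (l *\<^sub>R x + (1-l) *\<^sub>R y)"
    if h: "0 \<le> a'" "0 \<le> b'" "ennreal a' \<le> F x" "ennreal b' \<le> G y" for x y a' b'
  proof (cases "a' = 0 \<or> b' = 0")
    case True thus ?thesis by auto
  next
    case False
    have xA: "x \<in> interior A"
    proof (rule ccontr)
      assume "x \<notin> interior A"
      hence "ennreal a' \<le> 0" using h(3) by (simp add: F_def)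
      thus False using False h by simp
    qed
    have yB: "y \<in> interior B"
    proof (rule ccontr)
      assume "y \<notin> interior B"
      hence "ennreal b' \<le> 0" using h(4) by (simp add: G_def)
      thus False using False h by simp
    qed
    have "a' \<le> 1" using h(3) xA by (simp add: F_def)
    have "b' \<le> 1" using h(4) yB by (simp add: G_def)
    have "l *\<^sub>R x + (1-l) *\<^sub>R y \<in> closure C"
      using sub xA yB interior_subset closure_subset by blast
    moreover have "a' powr l * b' powr (1-l) \<le> 1"
      using \<open>a' \<le> 1\<close> \<open>b' \<le> 1\<close> h l by (intro mult_le_one powr_le1) auto
    ultimately show ?thesis by (simp add: H_def)
  qed
  have "ennreal (a powr l * b powr (1-l)) \<le> (\<integral>\<^sup>+x. H x \<partial>lborel)"
    by (rule pl_euclid[of F G H l, OF _ _ _ l hyp]) (use ab iF iG in auto)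
  thus ?thesis using iH by simp
qed


lemma pow_powr_DIM:
  assumes "0 \<le> (x::real)"
  shows "(x ^ DIM('a::euclidean_space)) powr (1 / real DIM('a)) = x"
proof (cases "x = 0")
  case True thus ?thesis by simp
next
  case False
  hence "x > 0" using assms by simp
  hence "(x ^ DIM('a)) powr (1 / real DIM('a)) = (x powr real DIM('a)) powr (1 / real DIM('a))"
    by (simp add: powr_realpow)
  also have "\<dots> = x" using \<open>x > 0\<close> by (simp add: powr_powr)
  finally show ?thesis .
qed

lemma powr_DIM_pow:
  assumes "0 \<le> (x::real)"
  shows "(x powr (1 / real DIM('a::euclidean_space))) ^ DIM('a) = x"
proof (cases "x = 0")
  case True thus ?thesis by simp
next
  case False
  hence "x > 0" using assms by simp
  hence "(x powr (1 / real DIM('a))) ^ DIM('a) = (x powr (1 / real DIM('a))) powr real DIM('a)"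
    by (simp add: powr_realpow)
  also have "\<dots> = x" using \<open>x > 0\<close> by (simp add: powr_powr)
  finally show ?thesis .
qed

lemma measure_scale_image:
  fixes S :: "'a::euclidean_space set"
  shows "measure lebesgue ((\<lambda>x. c *\<^sub>R x + d) ` S) = \<bar>c\<bar> ^ DIM('a) * measure lebesgue S"
  using measure_lebesgue_affine[of c d S] by simp

lemma emeasure_scale_image:
  fixes S :: "'a::euclidean_space set"
  shows "emeasure lebesgue ((\<lambda>x. c *\<^sub>R x + d) ` S) = ennreal (\<bar>c\<bar> ^ DIM('a)) * emeasure lebesgue S"
  using emeasure_lebesgue_affine[of c d S] by (simp add: ennreal_power)

lemma bm_add_degenerate:
  fixes A B C :: "'a::euclidean_space set"
  assumes cvx: "convex B" "convex C" and a0: "a0 \<in> A" and l: "0<l" "l<1"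
    and sub: "\<And>x y. x \<in> A \<Longrightarrow> y \<in> B \<Longrightarrow> l *\<^sub>R x + (1-l) *\<^sub>R y \<in> C"
    and fin: "emeasure lebesgue C < \<infinity>"
  shows "(1-l) * measure lebesgue B powr (1 / real DIM('a)) \<le> measure lebesgue C powr (1 / real DIM('a))"
proof -
  define X where "X = (\<lambda>y. (1-l) *\<^sub>R y + l *\<^sub>R a0) ` B"
  have "X \<subseteq> C" unfolding X_def using sub a0 by (auto simp: add.commute)
  have feq: "(\<lambda>y. (1-l) *\<^sub>R y + l *\<^sub>R a0) = (\<lambda>y. l *\<^sub>R a0 + (1-l) *\<^sub>R y)"
    by (auto simp: add.commute)
  have "convex X" unfolding X_def feq by (rule convex_affinity[OF cvx(1)])
  hence "X \<in> sets lebesgue" by (rule convex_lebesgue)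
  have "C \<in> fmeasurable lebesgue" using convex_lebesgue(1)[OF cvx(2)] fin by (simp add: fmeasurable_def)
  have "measure lebesgue X \<le> measure lebesgue C"
    by (rule measure_mono_fmeasurable) fact+
  moreover have "measure lebesgue X = (1-l) ^ DIM('a) * measure lebesgue B"
    unfolding X_def using measure_scale_image[of "1-l" "l *\<^sub>R a0" B] l by simp
  ultimately have le: "(1-l) ^ DIM('a) * measure lebesgue B \<le> measure lebesgue C" by simp
  have "(1-l) * measure lebesgue B powr (1 / real DIM('a))
      = ((1-l) ^ DIM('a) * measure lebesgue B) powr (1 / real DIM('a))"
    using l by (simp add: powr_mult pow_powr_DIM)
  also have "\<dots> \<le> measure lebesgue C powr (1 / real DIM('a))"
    using le l by (intro powr_mono2) auto
  finally show ?thesis .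
qed

lemma bm_add:
  fixes A B C :: "'a::euclidean_space set"
  assumes cvx: "convex A" "convex B" "convex C" and ne: "A \<noteq> {}" "B \<noteq> {}" and l: "0<l" "l<1"
    and sub: "\<And>x y. x \<in> A \<Longrightarrow> y \<in> B \<Longrightarrow> l *\<^sub>R x + (1-l) *\<^sub>R y \<in> C"
    and fin: "emeasure lebesgue C < \<infinity>"
  shows "l * measure lebesgue A powr (1 / real DIM('a)) + (1-l) * measure lebesgue B powr (1 / real DIM('a))
          \<le> measure lebesgue C powr (1 / real DIM('a))"
proof -
  let ?n = "1 / real DIM('a)"
  obtain a0 b0 where ab0: "a0 \<in> A" "b0 \<in> B" using ne by blast
  show ?thesis
  proof (cases "measure lebesgue A = 0 \<or> measure lebesgue B = 0")
    case True
    thus ?thesis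
    proof
      assume "measure lebesgue A = 0"
      thus ?thesis using bm_add_degenerate[OF cvx(2,3) ab0(1) l sub fin] by simp
    next
      assume "measure lebesgue B = 0"
      have sub': "(1-l) *\<^sub>R y + (1-(1-l)) *\<^sub>R x \<in> C" if "y \<in> B" "x \<in> A" for x y
        using sub[OF that(2,1)] by (simp add: add.commute)
      have l': "0 < 1-l" "1-l < 1" using l by auto
      have "(1 - (1-l)) * measure lebesgue A powr ?n \<le> measure lebesgue C powr ?n"
        by (rule bm_add_degenerate[OF cvx(1,3) ab0(2) l' sub' fin])
      thus ?thesis using \<open>measure lebesgue B = 0\<close> by simp
    qed
  next
    case False
    hence nz: "measure lebesgue A \<noteq> 0" "measure lebesgue B \<noteq> 0" by auto
    have mA: "measure lebesgue A > 0" using nz(1) measure_nonneg[of lebesgue A] by linarith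
    have mB: "measure lebesgue B > 0" using nz(2) measure_nonneg[of lebesgue B] by linarith
    have eA: "emeasure lebesgue A = ennreal (measure lebesgue A)"
      using mA by (intro emeasure_eq_ennreal_measure) (auto simp: measure_def)
    have eB: "emeasure lebesgue B = ennreal (measure lebesgue B)"
      using mB by (intro emeasure_eq_ennreal_measure) (auto simp: measure_def)
    have eC: "emeasure lebesgue C = ennreal (measure lebesgue C)"
      using fin by (intro emeasure_eq_ennreal_measure) auto
    define \<alpha> where "\<alpha> = measure lebesgue A powr ?n"
    define \<beta> where "\<beta> = measure lebesgue B powr ?n"
    have \<alpha>0: "\<alpha> > 0" and \<beta>0: "\<beta> > 0" using mA mB by (auto simp: \<alpha>_def \<beta>_def)
    have \<alpha>n: "\<alpha> ^ DIM('a) = measure lebesgue A" unfolding \<alpha>_def using mA by (intro powr_DIM_pow) auto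
    have \<beta>n: "\<beta> ^ DIM('a) = measure lebesgue B" unfolding \<beta>_def using mB by (intro powr_DIM_pow) auto
    define s where "s = l * \<alpha> + (1-l) * \<beta>"
    have s0: "s > 0" unfolding s_def using \<alpha>0 \<beta>0 l by (simp add: add_pos_pos)
    define \<mu> where "\<mu> = l * \<alpha> / s"
    have p1: "0 < l*\<alpha>" "0 < (1-l)*\<beta>" using \<alpha>0 \<beta>0 l by auto
    have \<mu>: "0 < \<mu>" "\<mu> < 1" unfolding \<mu>_def using p1 s0 by (auto simp: pos_divide_less_eq s_def)
    define A' where "A' = (\<lambda>x. (1/\<alpha>) *\<^sub>R x + 0) ` A"
    define B' where "B' = (\<lambda>x. (1/\<beta>) *\<^sub>R x + 0) ` B"
    define C' where "C' = (\<lambda>x. (1/s) *\<^sub>R x + 0) ` C"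
    have cv': "convex A'" "convex B'" "convex C'" unfolding A'_def B'_def C'_def
      using cvx by (simp_all add: convex_scaling)
    have c1: "\<mu> * (1/\<alpha>) = l / s" unfolding \<mu>_def using \<alpha>0 s0 by simp
    have m1: "1 - \<mu> = (1-l)*\<beta> / s"
    proof -
      have "1 - \<mu> = (s - l*\<alpha>)/s" using s0 by (simp add: \<mu>_def field_simps)
      also have "s - l*\<alpha> = (1-l)*\<beta>" by (simp add: s_def)
      finally show ?thesis .
    qed
    have c2: "(1 - \<mu>) * (1/\<beta>) = (1-l) / s" unfolding m1 using \<beta>0 by simp
    have sub': "\<mu> *\<^sub>R x + (1-\<mu>) *\<^sub>R y \<in> C'" if xyin: "x \<in> A'" "y \<in> B'" for x y
    proof -
      obtain x0 y0 where xy: "x0 \<in> A" "y0 \<in> B" "x = (1/\<alpha>) *\<^sub>R x0" "y = (1/\<beta>) *\<^sub>R y0"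
        using xyin unfolding A'_def B'_def by auto
      have "\<mu> *\<^sub>R x + (1-\<mu>) *\<^sub>R y = (\<mu> * (1/\<alpha>)) *\<^sub>R x0 + ((1 - \<mu>) * (1/\<beta>)) *\<^sub>R y0"
        by (simp only: xy scaleR_scaleR)
      also have "\<dots> = (l/s) *\<^sub>R x0 + ((1-l)/s) *\<^sub>R y0" by (simp only: c1 c2)
      also have "\<dots> = (1/s) *\<^sub>R (l *\<^sub>R x0 + (1-l) *\<^sub>R y0)" by (simp add: scaleR_add_right)
      finally have "\<mu> *\<^sub>R x + (1-\<mu>) *\<^sub>R y = (1/s) *\<^sub>R (l *\<^sub>R x0 + (1-l) *\<^sub>R y0)" .
      thus ?thesis unfolding C'_def using sub[OF xy(1,2)] by auto
    qed
    have eA': "emeasure lebesgue A' = 1"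
    proof -
      have "(1/\<alpha>)^DIM('a) * \<alpha>^DIM('a) = ((1/\<alpha>) * \<alpha>)^DIM('a)" by (rule power_mult_distrib[symmetric])
      also have "(1/\<alpha>) * \<alpha> = 1" using \<alpha>0 by simp
      finally have q: "\<bar>1/\<alpha>\<bar>^DIM('a) * measure lebesgue A = 1" using \<alpha>0 \<alpha>n by simp
      have "ennreal (\<bar>1/\<alpha>\<bar>^DIM('a)) * ennreal (measure lebesgue A) = ennreal (\<bar>1/\<alpha>\<bar>^DIM('a) * measure lebesgue A)"
        by (rule ennreal_mult[symmetric]) auto
      thus ?thesis unfolding A'_def emeasure_scale_image eA q by simp
    qed
    have eB': "emeasure lebesgue B' = 1"
    proof -
      have "(1/\<beta>)^DIM('a) * \<beta>^DIM('a) = ((1/\<beta>) * \<beta>)^DIM('a)" by (rule power_mult_distrib[symmetric])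
      also have "(1/\<beta>) * \<beta> = 1" using \<beta>0 by simp
      finally have q: "\<bar>1/\<beta>\<bar>^DIM('a) * measure lebesgue B = 1" using \<beta>0 \<beta>n by simp
      have "ennreal (\<bar>1/\<beta>\<bar>^DIM('a)) * ennreal (measure lebesgue B) = ennreal (\<bar>1/\<beta>\<bar>^DIM('a) * measure lebesgue B)"
        by (rule ennreal_mult[symmetric]) auto
      thus ?thesis unfolding B'_def emeasure_scale_image eB q by simp
    qed
    have "ennreal (1 powr \<mu> * 1 powr (1-\<mu>)) \<le> emeasure lebesgue C'"
      by (rule bm_mult[OF cv' \<mu> sub']) (auto simp: eA' eB')
    hence "1 \<le> ennreal ((1/s) ^ DIM('a) * measure lebesgue C)"
      unfolding C'_def emeasure_scale_image eC using s0
      by (simp add: ennreal_mult[symmetric])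
    hence "1 \<le> (1/s) ^ DIM('a) * measure lebesgue C"
      using ennreal_le_iff[of "(1/s) ^ DIM('a) * measure lebesgue C" 1] s0 by simp
    hence "s ^ DIM('a) \<le> measure lebesgue C" using s0 by (simp add: field_simps power_divide)
    hence "(s ^ DIM('a)) powr ?n \<le> measure lebesgue C powr ?n" using s0 by (intro powr_mono2) auto
    thus ?thesis using s0 unfolding s_def \<alpha>_def \<beta>_def by (simp add: pow_powr_DIM)
  qed
qed


locale lc1 =
  fixes f :: "'a::euclidean_space \<Rightarrow> real"
  assumes int: "integrable lborel f" and lc: "log_concave f" and intr: "interior (supp f) \<noteq> {}"
begin

lemma nonneg: "0 \<le> f x" using lc unfolding log_concave_def by auto

lemma lcI: "0 \<le> l \<Longrightarrow> l \<le> 1 \<Longrightarrow> f x powr (1 - l) * f y powr l \<le> f ((1 - l) *\<^sub>R x + l *\<^sub>R y)"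
  using lc unfolding log_concave_def by auto

lemma meas[measurable]: "f \<in> borel_measurable borel"
  using borel_measurable_integrable[OF int] by simp

lemma convex_supp: "convex (supp f)"
  unfolding convex_def
proof (intro ballI allI impI)
  fix x y u v :: real
  fix x y assume xy: "x \<in> supp f" "y \<in> supp f"
  fix u v :: real assume uv: "0 \<le> u" "0 \<le> v" "u + v = 1"
  have "0 < f x powr (1 - v) * f y powr v" using xy by (simp add: supp_def)
  also have "\<dots> \<le> f ((1 - v) *\<^sub>R x + v *\<^sub>R y)" using uv by (intro lcI) auto
  finally have "0 < f ((1 - v) *\<^sub>R x + v *\<^sub>R y)" .
  moreover have "u = 1 - v" using uv by simp
  ultimately show "u *\<^sub>R x + v *\<^sub>R y \<in> supp f" by (simp add: supp_def)
qed

lemma nn_fin: "(\<integral>\<^sup>+x. ennreal (f x) \<partial>lborel) < \<infinity>"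
  using int unfolding integrable_iff_bounded using nonneg by simp

lemma nn_eq: "(\<integral>\<^sup>+x. ennreal (f x) \<partial>lborel) = ennreal (integral\<^sup>L lborel f)"
  using nn_integral_eq_integral[OF int] nonneg by simp

lemma level_bound: assumes "s > 0"
  shows "ennreal s * emeasure lborel {x. s \<le> f x} \<le> (\<integral>\<^sup>+x. ennreal (f x) \<partial>lborel)"
proof -
  have "ennreal s * emeasure lborel {x. s \<le> f x} = (\<integral>\<^sup>+x. ennreal s * indicator {x. s \<le> f x} x \<partial>lborel)"
    by (subst nn_integral_cmult_indicator) auto
  also have "\<dots> \<le> (\<integral>\<^sup>+x. ennreal (f x) \<partial>lborel)"
    by (intro nn_integral_mono) (auto simp: indicator_def intro: ennreal_leI)
  finally show ?thesis .
qed

lemma level_fin: assumes "s > 0" shows "emeasure lborel {x. s \<le> f x} < \<infinity>"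
proof -
  have "ennreal s * emeasure lborel {x. s \<le> f x} < \<infinity>"
    using level_bound[OF assms] nn_fin by (rule le_less_trans)
  thus ?thesis using assms by (auto simp: ennreal_mult_less_top)
qed

lemma level_fin_leb: assumes "s > 0" shows "emeasure lebesgue {x. s \<le> f x} < \<infinity>"
  using level_fin[OF assms] by simp

lemma pos_level: "\<exists>\<delta>>0. 0 < emeasure lborel {x. \<delta> \<le> f x}"
proof -
  define D where "D k = {x. 1 / real (Suc k) \<le> f x}" for k
  have Db: "D k \<in> sets borel" for k unfolding D_def by measurable
  have "(SUP k. emeasure lborel (D k)) = emeasure lborel (\<Union>k. D k)"
  proof (rule SUP_emeasure_incseq)
    show "incseq D" unfolding incseq_def D_def
      by (auto intro: order.trans[rotated] simp: frac_le)
  qed (use Db in auto)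
  moreover have "(\<Union>k. D k) = supp f"
  proof
    show "(\<Union>k. D k) \<subseteq> supp f" unfolding D_def supp_def
      by (auto intro: less_le_trans[rotated])
    show "supp f \<subseteq> (\<Union>k. D k)"
    proof
      fix x assume "x \<in> supp f"
      hence "0 < f x" by (simp add: supp_def)
      then obtain k where "1 / real (Suc k) < f x" using nat_approx_posE by blast
      thus "x \<in> (\<Union>k. D k)" unfolding D_def by (auto intro!: exI[of _ k])
    qed
  qed
  moreover have pos: "0 < emeasure lborel (supp f)"
  proof -
    have "\<not> negligible (interior (supp f))" by (rule open_not_negligible) (use intr in auto)
    hence "interior (supp f) \<notin> null_sets lebesgue" by (simp add: negligible_iff_null_sets)
    hence "0 < emeasure lebesgue (interior (supp f))"
      by (simp add: null_sets_def borel_open zero_less_iff_neq_zero)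
    also have "\<dots> \<le> emeasure lebesgue (supp f)"
      by (intro emeasure_mono interior_subset) (auto simp: supp_def)
    finally show ?thesis by (simp add: supp_def)
  qed
  ultimately have "0 < (SUP k. emeasure lborel (D k))" by simp
  then obtain k where "0 < emeasure lborel (D k)" by (auto simp: less_SUP_iff)
  thus ?thesis unfolding D_def by (intro exI[of _ "1 / real (Suc k)"]) auto
qed

lemma bounded_above: "\<exists>K. \<forall>x. f x \<le> K"
proof -
  obtain \<delta> where \<delta>: "\<delta> > 0" "0 < emeasure lborel {x. \<delta> \<le> f x}" using pos_level by blast
  define D where "D = {x. \<delta> \<le> f x}"
  have Db: "D \<in> sets borel" unfolding D_def by measurable
  have Dfin: "emeasure lborel D < \<infinity>" unfolding D_def using level_fin[OF \<delta>(1)] .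
  define mD where "mD = measure lborel D"
  have eD: "emeasure lborel D = ennreal mD" unfolding mD_def using Dfin by (intro emeasure_eq_ennreal_measure) auto
  have mD0: "mD > 0" using \<delta>(2) eD unfolding D_def by (auto simp: mD_def measure_nonneg less_le)
  define I where "I = integral\<^sup>L lborel f"
  define n where "n = DIM('a)"
  define K where "K = (I / ((1/2)^n * mD))^2 / \<delta>"
  have "f x \<le> K" for x
  proof -
    define M where "M = f x"
    have M0: "0 \<le> M" by (simp add: M_def nonneg)
    define E where "E = (\<lambda>y. (1/2) *\<^sub>R y + (1/2) *\<^sub>R x) ` D"
    have Eeq: "E = (\<lambda>e. 2 *\<^sub>R e - x) -` D"
      unfolding E_def by (auto simp: image_iff scaleR_add_right algebra_simps intro!: bexI[of _ "2 *\<^sub>R e - x" for e])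
    have mm: "(\<lambda>e. 2 *\<^sub>R e - x) \<in> borel_measurable borel"
      by (intro borel_measurable_continuous_onI continuous_intros)
    have Eb: "E \<in> sets borel" using measurable_sets[OF mm Db] unfolding Eeq by simp
    have eE: "emeasure lborel E = ennreal ((1/2)^n) * ennreal mD"
      using emeasure_scale_image[of "1/2" "(1/2) *\<^sub>R x" D] Eb Db eD unfolding E_def n_def by simp
    have low: "sqrt (M * \<delta>) \<le> f e" if "e \<in> E" for e
    proof -
      obtain y where y: "y \<in> D" "e = (1/2) *\<^sub>R y + (1/2) *\<^sub>R x" using \<open>e \<in> E\<close> unfolding E_def by auto
      have "f x powr (1 - 1/2) * f y powr (1/2) \<le> f ((1 - 1/2) *\<^sub>R x + (1/2) *\<^sub>R y)"
        by (rule lcI) auto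
      hence "sqrt M * sqrt (f y) \<le> f e" using y M0 nonneg[of y]
        by (simp add: powr_half_sqrt add.commute M_def)
      moreover have "sqrt \<delta> \<le> sqrt (f y)" using y(1) unfolding D_def by simp
      ultimately show ?thesis using M0 by (metis mult_left_mono order.trans real_sqrt_ge_zero real_sqrt_mult)
    qed
    have "ennreal (sqrt (M * \<delta>)) * emeasure lborel E = (\<integral>\<^sup>+z. ennreal (sqrt (M * \<delta>)) * indicator E z \<partial>lborel)"
      using Eb by (subst nn_integral_cmult_indicator) auto
    also have "\<dots> \<le> (\<integral>\<^sup>+z. ennreal (f z) \<partial>lborel)"
      using low by (intro nn_integral_mono) (auto simp: indicator_def intro: ennreal_leI)
    also have "\<dots> = ennreal I" unfolding I_def by (rule nn_eq)
    finally have A: "ennreal (sqrt (M * \<delta>)) * emeasure lborel E \<le> ennreal I" .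
    have e1: "emeasure lborel E = ennreal ((1/2)^n * mD)"
      unfolding eE using mD0 by (subst ennreal_mult) auto
    have e2: "ennreal (sqrt (M * \<delta>)) * ennreal ((1/2)^n * mD) = ennreal (sqrt (M * \<delta>) * ((1/2)^n * mD))"
      by (rule ennreal_mult''[symmetric]) (use mD0 in simp)
    have I0: "0 \<le> I" unfolding I_def using nonneg by (simp add: integral_nonneg_AE)
    have le: "sqrt (M * \<delta>) * ((1/2)^n * mD) \<le> I"
      using A unfolding e1 e2 using ennreal_le_iff[OF I0] by simp
    have pos: "(1/2)^n * mD > 0" using mD0 by simp
    have "sqrt (M * \<delta>) \<le> I / ((1/2)^n * mD)" using le pos by (simp add: pos_le_divide_eq)
    hence "(sqrt (M * \<delta>))^2 \<le> (I / ((1/2)^n * mD))^2"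
      by (intro power_mono) (use M0 \<delta> in auto)
    hence "M * \<delta> \<le> (I / ((1/2)^n * mD))^2" using M0 \<delta> by simp
    thus ?thesis unfolding K_def M_def using \<delta> by (simp add: pos_le_divide_eq)
  qed
  thus ?thesis by blast
qed

definition S where "S = sup_norm f"

lemma bdd: "bdd_above (range f)" using bounded_above by (auto simp: bdd_above_def)

lemma le_S: "f x \<le> S" unfolding S_def sup_norm_def using bdd by (auto intro: cSUP_upper)

lemma S_pos: "S > 0"
proof -
  obtain x where "x \<in> supp f" using intr interior_subset by blast
  hence "0 < f x" by (simp add: supp_def)
  thus ?thesis using le_S[of x] by simp
qed

lemma exists_near_S: assumes "c < S" shows "\<exists>x. c < f x"
  using assms unfolding S_def sup_norm_def using bdd by (auto simp: less_cSUP_iff)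

end


locale lcpair = F: lc1 f + G: lc1 g for f g :: "'a::euclidean_space \<Rightarrow> real"
begin

abbreviation "Mk \<equiv> minkowski_sum (supp f) (supp g)"

lemma SS: "sup_norm f = F.S" "sup_norm g = G.S" by (simp_all add: F.S_def G.S_def)

lemma At_eq: assumes "t > 0"
  shows "At_set f g t x = {z. t * F.S * G.S \<le> f z * g (x - z)}"
proof
  show "At_set f g t x \<subseteq> {z. t * F.S * G.S \<le> f z * g (x - z)}"
    unfolding At_set_def SS by auto
  show "{z. t * F.S * G.S \<le> f z * g (x - z)} \<subseteq> At_set f g t x"
  proof
    fix z assume "z \<in> {z. t * F.S * G.S \<le> f z * g (x - z)}"
    hence h: "t * F.S * G.S \<le> f z * g (x - z)" by simp
    have "0 < t * F.S * G.S" using assms F.S_pos G.S_pos by simp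
    hence p: "0 < f z * g (x - z)" using h by linarith
    have "f z \<noteq> 0" "g (x - z) \<noteq> 0" using p by auto
    hence "0 < f z" "0 < g (x - z)" using F.nonneg[of z] G.nonneg[of "x - z"] by auto
    hence "z \<in> supp f" "z \<in> {x - w | w. w \<in> supp g}"
      by (auto simp: supp_def intro!: exI[of _ "x - z"])
    thus "z \<in> At_set f g t x" unfolding At_set_def SS using h by auto
  qed
qed

lemma prod_lc:
  assumes l: "0 \<le> l" "l \<le> 1" and c: "0 < c1" "0 < c2"
    and h1: "c1 \<le> f z1 * g w1" and h2: "c2 \<le> f z2 * g w2"
  shows "c1 powr l * c2 powr (1-l) \<le> f (l *\<^sub>R z1 + (1-l) *\<^sub>R z2) * g (l *\<^sub>R w1 + (1-l) *\<^sub>R w2)"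
proof -
  have ef: "f z2 powr (1 - l) * f z1 powr l \<le> f (l *\<^sub>R z1 + (1-l) *\<^sub>R z2)"
    using F.lcI[OF l, of z2 z1] by (simp add: add.commute)
  have eg: "g w2 powr (1 - l) * g w1 powr l \<le> g (l *\<^sub>R w1 + (1-l) *\<^sub>R w2)"
    using G.lcI[OF l, of w2 w1] by (simp add: add.commute)
  have n: "0 \<le> f z1" "0 \<le> f z2" "0 \<le> g w1" "0 \<le> g w2" by (simp_all add: F.nonneg G.nonneg)
  have "c1 powr l * c2 powr (1-l) \<le> (f z1 * g w1) powr l * (f z2 * g w2) powr (1-l)"
    using c h1 h2 l by (intro mult_mono powr_mono2) auto
  also have "\<dots> = (f z2 powr (1 - l) * f z1 powr l) * (g w2 powr (1 - l) * g w1 powr l)"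
    using n by (simp add: powr_mult)
  also have "\<dots> \<le> f (l *\<^sub>R z1 + (1-l) *\<^sub>R z2) * g (l *\<^sub>R w1 + (1-l) *\<^sub>R w2)"
    using ef eg by (intro mult_mono) (auto simp: F.nonneg G.nonneg)
  finally show ?thesis .
qed

lemma At_convex: assumes "t > 0" shows "convex (At_set f g t x)"
  unfolding At_eq[OF assms] convex_def
proof (intro ballI allI impI, simp)
  fix z1 z2 u v :: "'a" 
  fix u v :: real
  assume h1: "t * F.S * G.S \<le> f z1 * g (x - z1)" and h2: "t * F.S * G.S \<le> f z2 * g (x - z2)"
    and uv: "0 \<le> u" "0 \<le> v" "u + v = 1"
  have c: "0 < t * F.S * G.S" using assms F.S_pos G.S_pos by simp
  have "(t * F.S * G.S) powr u * (t * F.S * G.S) powr (1-u)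
        \<le> f (u *\<^sub>R z1 + (1-u) *\<^sub>R z2) * g (u *\<^sub>R (x - z1) + (1-u) *\<^sub>R (x - z2))"
    using uv by (intro prod_lc c h1 h2) auto
  moreover have "(t * F.S * G.S) powr u * (t * F.S * G.S) powr (1-u) = t * F.S * G.S"
    using c by (simp add: powr_add[symmetric])
  moreover have "v = 1 - u" using uv by simp
  moreover have "u *\<^sub>R (x - z1) + (1-u) *\<^sub>R (x - z2) = x - (u *\<^sub>R z1 + (1-u) *\<^sub>R z2)"
    by (simp add: algebra_simps)
  ultimately show "t * F.S * G.S \<le> f (u *\<^sub>R z1 + v *\<^sub>R z2) * g (x - (u *\<^sub>R z1 + v *\<^sub>R z2))"
    by simp
qed

lemma At_sub: assumes "t > 0" shows "At_set f g t x \<subseteq> {z. t * F.S \<le> f z}"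
proof
  fix z assume "z \<in> At_set f g t x"
  hence h: "t * F.S * G.S \<le> f z * g (x - z)" using At_eq[OF assms] by simp
  also have "\<dots> \<le> f z * G.S" using G.le_S F.nonneg by (intro mult_left_mono) auto
  finally show "z \<in> {z. t * F.S \<le> f z}" using G.S_pos by simp
qed

lemma At_lebesgue: assumes "t > 0" shows "At_set f g t x \<in> sets lebesgue"
  using convex_lebesgue(1)[OF At_convex[OF assms]] .

lemma lev_fmeas: assumes "t > 0" shows "{z. t * F.S \<le> f z} \<in> fmeasurable lebesgue"
proof -
  have "{z. t * F.S \<le> f z} \<in> sets borel" by measurable
  moreover have "emeasure lebesgue {z. t * F.S \<le> f z} < \<infinity>"
    using F.level_fin_leb[of "t * F.S"] assms F.S_pos by simp
  ultimately show ?thesis by (simp add: fmeasurable_def)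
qed

lemma At_fin: assumes "t > 0" shows "emeasure lebesgue (At_set f g t x) < \<infinity>"
proof -
  have "emeasure lebesgue (At_set f g t x) \<le> emeasure lebesgue {z. t * F.S \<le> f z}"
    by (intro emeasure_mono At_sub assms) (use lev_fmeas[OF assms] in \<open>simp add: fmeasurable_def\<close>)
  also have "\<dots> < \<infinity>" using lev_fmeas[OF assms] by (simp add: fmeasurable_def)
  finally show ?thesis .
qed

lemma At_meas_le: assumes "t > 0"
  shows "measure lebesgue (At_set f g t x) \<le> measure lebesgue {z. t * F.S \<le> f z}"
  by (rule measure_mono_fmeasurable[OF At_sub[OF assms] At_lebesgue[OF assms] lev_fmeas[OF assms]])

lemma At_comb:
  assumes t: "t1 > 0" "t2 > 0" and l: "0 \<le> l" "l \<le> 1"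
    and z1: "z1 \<in> At_set f g t1 x1" and z2: "z2 \<in> At_set f g t2 x2"
  shows "l *\<^sub>R z1 + (1-l) *\<^sub>R z2 \<in> At_set f g (t1 powr l * t2 powr (1-l)) (l *\<^sub>R x1 + (1-l) *\<^sub>R x2)"
proof -
  have tt: "t1 powr l * t2 powr (1-l) > 0" using t by simp
  have h1: "t1 * F.S * G.S \<le> f z1 * g (x1 - z1)" using z1 At_eq[OF t(1)] by simp
  have h2: "t2 * F.S * G.S \<le> f z2 * g (x2 - z2)" using z2 At_eq[OF t(2)] by simp
  have c: "0 < t1 * F.S * G.S" "0 < t2 * F.S * G.S" using t F.S_pos G.S_pos by auto
  have "(t1 * F.S * G.S) powr l * (t2 * F.S * G.S) powr (1-l)
        \<le> f (l *\<^sub>R z1 + (1-l) *\<^sub>R z2) * g (l *\<^sub>R (x1 - z1) + (1-l) *\<^sub>R (x2 - z2))"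
    by (rule prod_lc[OF l c h1 h2])
  moreover have "(t1 * F.S * G.S) powr l * (t2 * F.S * G.S) powr (1-l) = (t1 powr l * t2 powr (1-l)) * F.S * G.S"
  proof -
    have "(t1 * F.S * G.S) powr l * (t2 * F.S * G.S) powr (1-l)
       = (t1 powr l * t2 powr (1-l)) * ((F.S * G.S) powr l * (F.S * G.S) powr (1-l))"
      using t F.S_pos G.S_pos by (simp add: powr_mult mult_ac)
    also have "(F.S * G.S) powr l * (F.S * G.S) powr (1-l) = F.S * G.S"
      using F.S_pos G.S_pos by (simp add: powr_add[symmetric])
    finally show ?thesis by (simp add: mult_ac)
  qed
  moreover have "l *\<^sub>R (x1 - z1) + (1-l) *\<^sub>R (x2 - z2) = (l *\<^sub>R x1 + (1-l) *\<^sub>R x2) - (l *\<^sub>R z1 + (1-l) *\<^sub>R z2)"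
    by (simp add: algebra_simps)
  ultimately show ?thesis unfolding At_eq[OF tt] by simp
qed

lemma Mk_comb:
  assumes "x1 \<in> Mk" "x2 \<in> Mk" "0 \<le> l" "l \<le> 1"
  shows "l *\<^sub>R x1 + (1-l) *\<^sub>R x2 \<in> Mk"
proof -
  obtain a1 b1 where 1: "x1 = a1 + b1" "a1 \<in> supp f" "b1 \<in> supp g" using assms(1) unfolding minkowski_sum_def by auto
  obtain a2 b2 where 2: "x2 = a2 + b2" "a2 \<in> supp f" "b2 \<in> supp g" using assms(2) unfolding minkowski_sum_def by auto
  have "l *\<^sub>R a1 + (1-l) *\<^sub>R a2 \<in> supp f" using F.convex_supp 1 2 assms(3,4) unfolding convex_def by auto
  moreover have "l *\<^sub>R b1 + (1-l) *\<^sub>R b2 \<in> supp g" using G.convex_supp 1 2 assms(3,4) unfolding convex_def by auto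
  moreover have "l *\<^sub>R x1 + (1-l) *\<^sub>R x2 = (l *\<^sub>R a1 + (1-l) *\<^sub>R a2) + (l *\<^sub>R b1 + (1-l) *\<^sub>R b2)"
    using 1 2 by (simp add: algebra_simps)
  ultimately show ?thesis unfolding minkowski_sum_def by blast
qed

lemma Mk_ne: "Mk \<noteq> {}"
proof -
  obtain a where "a \<in> supp f" using F.intr interior_subset by blast
  moreover obtain b where "b \<in> supp g" using G.intr interior_subset by blast
  ultimately show ?thesis unfolding minkowski_sum_def by blast
qed

lemma good_lt1: assumes "0 < t" "t < 1" shows "\<exists>x\<in>Mk. At_set f g t x \<noteq> {}"
proof -
  define s where "s = sqrt t"
  have s: "0 < s" "s < 1" "s * s = t" using assms unfolding s_def by auto
  obtain z where z: "s * F.S < f z" using F.exists_near_S[of "s * F.S"] s F.S_pos by auto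
  obtain w where w: "s * G.S < g w" using G.exists_near_S[of "s * G.S"] s G.S_pos by auto
  have zs: "z \<in> supp f" using z s F.S_pos unfolding supp_def
    by (metis less_trans mem_Collect_eq mult_pos_pos)
  have ws: "w \<in> supp g" using w s G.S_pos unfolding supp_def
    by (metis less_trans mem_Collect_eq mult_pos_pos)
  have "z + w \<in> Mk" using zs ws unfolding minkowski_sum_def by blast
  moreover have "z \<in> At_set f g t (z + w)"
  proof -
    have "(s * F.S) * (s * G.S) \<le> f z * g w"
      using z w s F.S_pos G.S_pos by (intro mult_mono) (auto simp: F.nonneg)
    moreover have "(s * F.S) * (s * G.S) = t * F.S * G.S" unfolding s(3)[symmetric] by (simp add: mult_ac)
    ultimately show ?thesis unfolding At_eq[OF assms(1)] by simp
  qed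
  ultimately show ?thesis by blast
qed

lemma bddM: assumes "t > 0" shows "bdd_above ((\<lambda>x. measure lebesgue (At_set f g t x)) ` Mk)"
  using At_meas_le[OF assms] by (auto simp: bdd_above_def)

lemma le_M: assumes "t > 0" "x \<in> Mk" shows "measure lebesgue (At_set f g t x) \<le> M_t f g t"
  unfolding M_t_def using assms bddM[OF assms(1)] by (intro cSUP_upper) auto

lemma M_nonneg: assumes "t > 0" shows "0 \<le> M_t f g t"
proof -
  obtain x where "x \<in> Mk" using Mk_ne by blast
  thus ?thesis using le_M[OF assms] measure_nonneg[of lebesgue "At_set f g t x"] by (meson order.trans)
qed

end


lemma sup_powr_bound:
  fixes h :: "'b \<Rightarrow> real"
  assumes "S \<noteq> {}" "bdd_above (h ` S)" "\<And>x. x\<in>S \<Longrightarrow> 0 \<le> h x"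
    and "\<And>x. x\<in>S \<Longrightarrow> h x powr (1 / real DIM('a::euclidean_space)) \<le> K"
  shows "(SUP x\<in>S. h x) powr (1 / real DIM('a)) \<le> K"
proof -
  obtain x0 where "x0 \<in> S" using assms(1) by blast
  hence K0: "0 \<le> K" using assms(4)[of x0] by (meson order.trans powr_ge_zero)
  have "h x \<le> K ^ DIM('a)" if "x \<in> S" for x
  proof -
    have "h x = (h x powr (1 / real DIM('a))) ^ DIM('a)" using assms(3)[OF that] by (simp add: powr_DIM_pow)
    also have "\<dots> \<le> K ^ DIM('a)" using assms(4)[OF that] by (intro power_mono) auto
    finally show ?thesis .
  qed
  hence "(SUP x\<in>S. h x) \<le> K ^ DIM('a)" using assms(1) by (intro cSUP_least) auto
  moreover have "0 \<le> (SUP x\<in>S. h x)"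
    using assms(3)[OF \<open>x0 \<in> S\<close>] cSUP_upper[OF \<open>x0 \<in> S\<close> assms(2)] by linarith
  ultimately have "(SUP x\<in>S. h x) powr (1 / real DIM('a)) \<le> (K ^ DIM('a)) powr (1 / real DIM('a))"
    by (intro powr_mono2) auto
  also have "\<dots> = K" using K0 by (simp add: pow_powr_DIM)
  finally show ?thesis .
qed

context lcpair
begin

abbreviation "Gd t \<equiv> (\<exists>x\<in>Mk. At_set f g t x \<noteq> {})"

lemma main_good:
  assumes t: "0 < t1" "0 < t2" and l: "0 < l" "l < 1" and g1: "Gd t1" and g2: "Gd t2"
  shows "l * M_t f g t1 powr (1 / real DIM('a)) + (1-l) * M_t f g t2 powr (1 / real DIM('a))
         \<le> M_t f g (t1 powr l * t2 powr (1-l)) powr (1 / real DIM('a))"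
proof -
  let ?n = "1 / real DIM('a)"
  define t where "t = t1 powr l * t2 powr (1-l)"
  have t0: "t > 0" unfolding t_def using t by simp
  define R where "R = M_t f g t powr ?n"
  define m1 where "m1 x = measure lebesgue (At_set f g t1 x)" for x
  define m2 where "m2 x = measure lebesgue (At_set f g t2 x)" for x
  obtain x1s where x1s: "x1s \<in> Mk" "At_set f g t1 x1s \<noteq> {}" using g1 by blast
  obtain x2s where x2s: "x2s \<in> Mk" "At_set f g t2 x2s \<noteq> {}" using g2 by blast
  have key: "l * m1 x1 powr ?n + (1-l) * m2 x2 powr ?n \<le> R"
    if x: "x1 \<in> Mk" "x2 \<in> Mk" "At_set f g t1 x1 \<noteq> {}" "At_set f g t2 x2 \<noteq> {}" for x1 x2
  proof -
    let ?x = "l *\<^sub>R x1 + (1-l) *\<^sub>R x2"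
    have xM: "?x \<in> Mk" using x l by (intro Mk_comb) auto
    have "l * m1 x1 powr ?n + (1-l) * m2 x2 powr ?n \<le> measure lebesgue (At_set f g t ?x) powr ?n"
      unfolding m1_def m2_def
    proof (rule bm_add[OF At_convex[OF t(1)] At_convex[OF t(2)] At_convex[OF t0] x(3,4) l])
      fix z1 z2 assume "z1 \<in> At_set f g t1 x1" "z2 \<in> At_set f g t2 x2"
      thus "l *\<^sub>R z1 + (1-l) *\<^sub>R z2 \<in> At_set f g t ?x"
        unfolding t_def using t l by (intro At_comb) auto
    qed (rule At_fin[OF t0])
    also have "\<dots> \<le> R" unfolding R_def using le_M[OF t0 xM] by (intro powr_mono2) auto
    finally show ?thesis .
  qed
  have key2: "l * m1 x1 powr ?n + (1-l) * m2 x2 powr ?n \<le> R" if x: "x1 \<in> Mk" "x2 \<in> Mk" for x1 x2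
  proof -
    define x1' where "x1' = (if At_set f g t1 x1 = {} then x1s else x1)"
    define x2' where "x2' = (if At_set f g t2 x2 = {} then x2s else x2)"
    have "m1 x1 powr ?n \<le> m1 x1' powr ?n" unfolding x1'_def m1_def by auto
    moreover have "m2 x2 powr ?n \<le> m2 x2' powr ?n" unfolding x2'_def m2_def by auto
    moreover have "l * m1 x1' powr ?n + (1-l) * m2 x2' powr ?n \<le> R"
      using x x1s x2s unfolding x1'_def x2'_def by (intro key) auto
    ultimately show ?thesis using l by (smt (verit) mult_left_mono)
  qed
  have step1: "l * M_t f g t1 powr ?n + (1-l) * m2 x2 powr ?n \<le> R" if x2: "x2 \<in> Mk" for x2
  proof -
    have "M_t f g t1 powr ?n \<le> (R - (1-l) * m2 x2 powr ?n) / l"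
      unfolding M_t_def
    proof (rule sup_powr_bound[OF Mk_ne bddM[OF t(1)]])
      fix x1 assume "x1 \<in> Mk"
      thus "measure lebesgue (At_set f g t1 x1) powr ?n \<le> (R - (1-l) * m2 x2 powr ?n) / l"
        using key2[OF _ x2] l unfolding m1_def by (simp add: pos_le_divide_eq algebra_simps)
    qed auto
    thus ?thesis using l by (simp add: pos_le_divide_eq algebra_simps)
  qed
  have "M_t f g t2 powr ?n \<le> (R - l * M_t f g t1 powr ?n) / (1-l)"
    unfolding M_t_def[of f g t2]
  proof (rule sup_powr_bound[OF Mk_ne bddM[OF t(2)]])
    fix x2 assume "x2 \<in> Mk"
    thus "measure lebesgue (At_set f g t2 x2) powr ?n \<le> (R - l * M_t f g t1 powr ?n) / (1-l)"
      using step1 l unfolding m2_def by (simp add: pos_le_divide_eq algebra_simps)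
  qed auto
  thus ?thesis using l unfolding R_def t_def by (simp add: pos_le_divide_eq algebra_simps)
qed

lemma M_zero: assumes "\<not> Gd t" shows "M_t f g t = 0"
proof -
  have "M_t f g t = (SUP x\<in>Mk. 0)" unfolding M_t_def using assms by (intro SUP_cong) auto
  thus ?thesis using Mk_ne by simp
qed

lemma not_good_1: assumes "0 < t" "t \<le> 1" "\<not> Gd t" shows "t = 1"
  using good_lt1[of t] assms by force

lemma main_half:
  assumes t: "0 < t1" "t1 \<le> 1" "0 < t2" "t2 \<le> 1" and l: "0 < l" "l < 1" and g2: "Gd t2"
  shows "l * M_t f g t1 powr (1 / real DIM('a)) + (1-l) * M_t f g t2 powr (1 / real DIM('a))
         \<le> M_t f g (t1 powr l * t2 powr (1-l)) powr (1 / real DIM('a))"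
proof (cases "Gd t1")
  case True thus ?thesis using main_good t l g2 by auto
next
  case False
  let ?n = "1 / real DIM('a)"
  have t11: "t1 = 1" using not_good_1[OF t(1,2) False] .
  have M1: "M_t f g t1 = 0" using M_zero[OF False] .
  have t21: "t2 < 1" using g2 False t11 t(4) by (cases "t2 = 1") auto
  define R where "R = M_t f g (t2 powr (1-l)) powr ?n"
  have "(1-l) * M_t f g t2 powr ?n \<le> R"
  proof (rule field_le_mult_one_interval)
    fix z :: real assume z: "0 < z" "z < 1"
    define a where "a = 1 - z * (1-l)"
    have "z*(1-l) < 1*(1-l)" using z l by (intro mult_strict_right_mono) auto
    moreover have "0 < z*(1-l)" using z l by simp
    ultimately have a: "l < a" "a < 1" unfolding a_def by auto
    define e where "e = (a - l) / a"
    have e: "0 < e" "e < 1" unfolding e_def using a l by (auto simp: field_simps)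
    define \<tau> where "\<tau> = t2 powr e"
    have \<tau>: "0 < \<tau>" "\<tau> < 1" unfolding \<tau>_def using t(3) t21 e
      by (auto intro: order.strict_trans2[OF powr_less_mono2[of e t2 1]])
    have g\<tau>: "Gd \<tau>" using good_lt1[OF \<tau>] .
    have "a * M_t f g \<tau> powr ?n + (1-a) * M_t f g t2 powr ?n \<le> M_t f g (\<tau> powr a * t2 powr (1-a)) powr ?n"
      using main_good[OF \<tau>(1) t(3) _ _ g\<tau> g2, of a] a l by auto
    moreover have "\<tau> powr a * t2 powr (1-a) = t2 powr (1-l)"
    proof -
      have "\<tau> powr a = t2 powr (a - l)" unfolding \<tau>_def e_def using a l t(3) by (simp add: powr_powr)
      thus ?thesis using t(3) by (simp add: powr_add[symmetric])
    qed
    moreover have "0 \<le> a * M_t f g \<tau> powr ?n" using a l by simp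
    moreover have "1 - a = z * (1-l)" unfolding a_def by simp
    ultimately show "z * ((1-l) * M_t f g t2 powr ?n) \<le> R" unfolding R_def by (simp add: mult.assoc)
  qed
  thus ?thesis using t11 M1 unfolding R_def by simp
qed

lemma main_open:
  assumes t: "0 < t1" "t1 \<le> 1" "0 < t2" "t2 \<le> 1" and l: "0 < l" "l < 1"
  shows "l * M_t f g t1 powr (1 / real DIM('a)) + (1-l) * M_t f g t2 powr (1 / real DIM('a))
         \<le> M_t f g (t1 powr l * t2 powr (1-l)) powr (1 / real DIM('a))"
proof (cases "Gd t2")
  case True thus ?thesis using main_half[OF t l] by simp
next
  case F2: False
  show ?thesis
  proof (cases "Gd t1")
    case True
    have "(1-l) * M_t f g t2 powr (1 / real DIM('a)) + (1-(1-l)) * M_t f g t1 powr (1 / real DIM('a))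
         \<le> M_t f g (t2 powr (1-l) * t1 powr (1-(1-l))) powr (1 / real DIM('a))"
      using main_half[OF t(3,4,1,2), of "1-l"] l True by simp
    thus ?thesis by (simp add: mult.commute add.commute)
  next
    case False
    thus ?thesis using M_zero[OF False] M_zero[OF F2] by simp
  qed
qed

lemma main_ineq:
  assumes t: "0 < t1" "t1 \<le> 1" "0 < t2" "t2 \<le> 1" and l: "0 \<le> l" "l \<le> 1"
  shows "l * M_t f g t1 powr (1 / real DIM('a)) + (1-l) * M_t f g t2 powr (1 / real DIM('a))
         \<le> M_t f g (t1 powr l * t2 powr (1-l)) powr (1 / real DIM('a))"
proof -
  consider "l = 0" | "l = 1" | "0 < l \<and> l < 1" using l by fastforce
  thus ?thesis
  proof cases
    case 1 thus ?thesis using t by simp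
  next
    case 2 thus ?thesis using t by simp
  next
    case 3 thus ?thesis using main_open[OF t] by simp
  qed
qed

lemma continuity: "continuous_on {0<..<1} (M_t f g)"
proof -
  let ?n = "1 / real DIM('a)"
  define \<phi> where "\<phi> u = M_t f g (exp (- u)) powr ?n" for u :: real
  have conc: "\<phi> (l * u1 + (1-l) * u2) \<ge> l * \<phi> u1 + (1-l) * \<phi> u2"
    if "0 < u1" "0 < u2" "0 \<le> l" "l \<le> 1" for u1 u2 l
  proof -
    have "exp (- u1) powr l * exp (- u2) powr (1-l) = exp (- (l * u1 + (1-l) * u2))"
      by (simp add: powr_def exp_add[symmetric] algebra_simps)
    thus ?thesis unfolding \<phi>_def using main_ineq[of "exp (- u1)" "exp (- u2)" l] that by simp
  qed
  have "convex_on {0<..} (\<lambda>u. - \<phi> u)"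
    unfolding convex_on_def
  proof (intro conjI ballI allI impI)
    fix x y u v :: real
    assume xy: "x \<in> {0<..}" "y \<in> {0<..}" and uv: "0 \<le> u" "0 \<le> v" "u + v = 1"
    hence v: "v = 1 - u" by simp
    have c: "u * \<phi> x + (1-u) * \<phi> y \<le> \<phi> (u * x + (1-u) * y)" using conc[of x y u] xy uv v by simp
    have "- \<phi> (u * x + (1-u) * y) \<le> u * - \<phi> x + (1-u) * - \<phi> y" using c by linarith
    thus "- \<phi> (u *\<^sub>R x + v *\<^sub>R y) \<le> u * - \<phi> x + v * - \<phi> y"
      unfolding v by simp
  qed simp
  hence "continuous_on {0<..} (\<lambda>u. - \<phi> u)" by (intro convex_on_continuous) auto
  hence c\<phi>: "continuous_on {0<..} \<phi>" using continuous_on_minus[of "{0<..}" "\<lambda>u. - \<phi> u"] by simp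
  have "continuous_on {0<..<1} (\<lambda>t. \<phi> (- ln t))"
    by (rule continuous_on_compose2[OF c\<phi>]) (auto intro!: continuous_intros)
  hence "continuous_on {0<..<1} (\<lambda>t. \<phi> (- ln t) ^ DIM('a))" by (intro continuous_intros)
  moreover have "\<phi> (- ln t) ^ DIM('a) = M_t f g t" if "t \<in> {0<..<1}" for t
    using that M_nonneg[of t] unfolding \<phi>_def by (simp add: powr_DIM_pow)
  ultimately show ?thesis using continuous_on_cong by (metis (no_types, lifting))
qed

end

theorem lemma3p5:
  fixes f g :: "'a::euclidean_space \<Rightarrow> real"
  assumes "integrable lborel f" and "integrable lborel g"
    and "log_concave f" and "log_concave g"
    and "interior (supp f) \<noteq> {}" and "interior (supp g) \<noteq> {}"
  shows "(\<forall>t1\<in>{0<..1::real}. \<forall>t2\<in>{0<..1::real}. \<forall>l\<in>{0..1::real}.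
            M_t f g (t1 powr l * t2 powr (1 - l)) powr (1 / real DIM('a))
              \<ge> l * M_t f g t1 powr (1 / real DIM('a))
                + (1 - l) * M_t f g t2 powr (1 / real DIM('a)))
         \<and> continuous_on {0<..<1} (M_t f g)"
proof -
  interpret lcpair f g
    by unfold_locales (use assms in auto)
  show ?thesis using main_ineq continuity by auto
qed

end
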